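(* Let $G$ satisfy Condition 1, let the admissible input functions satisfy $\bigcap_{j=1}^kX_j\neq\emptyset$, and let the non-faulty agents run Algorithm 2 with step sizes as in the context, from arbitrary initial states and against arbitrary behavior of the faulty agents. Then there exists $x^*\in X$ such that for every non-faulty agent $i$, $\lim_{t\to\infty}|x_i(t)-x^*|=0$.
   Context: A synchronous system of $n$ agents communicates over a directed graph $G=(\mathcal{V},\mathcal{E})$, $\mathcal{V}=\{1,\dots,n\}$, without self-loops; $N_i^-=\{j:(j,i)\in\mathcal{E}\}$. At most $f$ agents are Byzantine faulty (may send arbitrary, possibly inconsistent values); $\mathcal{F}$ is the set of faulty agents. A function $h:\mathbb{R}\to\mathbb{R}$ is admissible if it is convex, $L$-Lipschitz, and $\arg\min h$ is nonempty and compact. Given admissible $h_1,\dots,h_k$ and an assignment matrix $\mathbf{A}\in\mathbb{R}^{k\times n}$ with nonnegative entries and columns summing to $1$, agent $i$ holds $g_i(x)=\sum_{j=1}^k\mathbf{A}_{ji}h_j(x)$ (agents do not know $\mathbf{A}$). Let $X_j=\arg\min h_j$ and $X=\arg\min h$ with $h=\frac1k\sum_{j=1}^kh_j$. Sparsity parameter $sp(\mathbf{A})$: smallest $s$ such that the sum of any $s$ columns of $\mathbf{A}$ is component-wise positive ($n+1$ if the sum of all columns is not). Reduced graph w.r.t. a set $\mathcal{F}'$ with $|\mathcal{F}'|\le f$: subgraph of $G$ obtained by removing the nodes of $\mathcal{F}'$ with their edges and then up to $f$ additional incoming edges at each remaining node. Source component: set of nodes of a graph each having a directed path to every other node of that graph.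 Condition 1: for every $\mathcal{F}'\subseteq\mathcal{V}$ with $|\mathcal{F}'|\le f$, every reduced graph w.r.t. $\mathcal{F}'$ has a source component with at least $\max\{f+1,sp(\mathbf{A})\}$ nodes. Step sizes: $\alpha(t)\ge0$ with $\alpha(t+1)\le\alpha(t)$ for all $t\ge0$, $\sum_{t}\alpha(t)=\infty$, $\sum_t\alpha^2(t)<\infty$. Algorithm 2: each non-faulty agent $i$ starts with an arbitrary $x_i(0)\in\mathbb{R}$; in iteration $t\ge1$ it sends $x_i(t-1)$ on all outgoing edges, receives the multiset of $|N_i^-|$ values on its incoming edges (a default value replaces any missing message), sorts them, discards the $f$ smallest and $f$ largest values (ties broken arbitrarily), lets $N_i^*(t)$ be the set of agents from which the remaining $|N_i^-|-2f$ values came with $w_j$ the value received from $j$, sets $w_i=x_i(t-1)$, and updates $x_i(t)=\frac{1}{|N_i^*(t)|+1}\sum_{j\in\{i\}\cup N_i^*(t)}w_j-\alpha(t-1)d_i(t-1)$, where $d_i(t-1)$ is a subgradient of $g_i$ at $x_i(t-1)$. *)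

theory Defs
  imports "HOL-Analysis.Analysis"
begin

text \<open>Agents are 1..n. A graph is an edge set E of pairs (j,i) meaning an edge from j to i.\<close>

definition in_nbrs :: "(nat \<times> nat) set \<Rightarrow> nat \<Rightarrow> nat set" where
  "in_nbrs E i = {j. (j, i) \<in> E}"

definition argmin_set :: "(real \<Rightarrow> real) \<Rightarrow> real set" where
  "argmin_set h = {x. \<forall>y. h x \<le> h y}"

definition admissible :: "real \<Rightarrow> (real \<Rightarrow> real) \<Rightarrow> bool" where
  "admissible L h \<longleftrightarrow> convex_on UNIV h \<and> L-lipschitz_on UNIV h \<and>
     argmin_set h \<noteq> {} \<and> compact (argmin_set h)"

definition cols_pos :: "nat \<Rightarrow> nat \<Rightarrow> (nat \<Rightarrow> nat \<Rightarrow> real) \<Rightarrow> nat \<Rightarrow> bool" where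
  "cols_pos k n A s \<longleftrightarrow> (\<forall>S. S \<subseteq> {1..n} \<and> card S = s \<longrightarrow>
       (\<forall>j\<in>{1..k}. (\<Sum>i\<in>S. A j i) > 0))"

definition sparsity :: "nat \<Rightarrow> nat \<Rightarrow> (nat \<Rightarrow> nat \<Rightarrow> real) \<Rightarrow> nat" where
  "sparsity k n A = (LEAST s. (s \<le> n \<and> cols_pos k n A s) \<or> s = n + 1)"

definition reduced_graph :: "nat set \<Rightarrow> (nat \<times> nat) set \<Rightarrow> nat \<Rightarrow> nat set \<Rightarrow> (nat \<times> nat) set \<Rightarrow> bool" where
  "reduced_graph V E f F' E' \<longleftrightarrow>
     E' \<subseteq> E \<inter> ((V - F') \<times> (V - F')) \<and>
     (\<forall>i\<in>V - F'. card ({j\<in>V - F'. (j, i) \<in> E} - {j. (j, i) \<in> E'}) \<le> f)"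

definition source_component :: "nat set \<Rightarrow> (nat \<times> nat) set \<Rightarrow> nat set" where
  "source_component W E' = {v\<in>W. \<forall>u\<in>W. (v, u) \<in> E'\<^sup>*}"

definition condition1 :: "nat set \<Rightarrow> (nat \<times> nat) set \<Rightarrow> nat \<Rightarrow> nat \<Rightarrow> bool" where
  "condition1 V E f sp \<longleftrightarrow>
     (\<forall>F' E'. F' \<subseteq> V \<and> card F' \<le> f \<and> reduced_graph V E f F' E' \<longrightarrow>
        card (source_component (V - F') E') \<ge> max (f + 1) sp)"

definition subgradient :: "(real \<Rightarrow> real) \<Rightarrow> real \<Rightarrow> real \<Rightarrow> bool" where
  "subgradient g x d \<longleftrightarrow> (\<forall>y. g y \<ge> g x + d * (y - x))"

text \<open>One update of Algorithm 2 at non-faulty agent i in iteration t \<ge> 1.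
  msg t j i is the value agent i receives from j in iteration t (arbitrary if j is faulty).\<close>
definition alg2_update ::
  "(nat \<times> nat) set \<Rightarrow> nat \<Rightarrow> (nat \<Rightarrow> real) \<Rightarrow> (real \<Rightarrow> real)
   \<Rightarrow> (nat \<Rightarrow> nat \<Rightarrow> nat \<Rightarrow> real) \<Rightarrow> (nat \<Rightarrow> nat \<Rightarrow> real) \<Rightarrow> nat \<Rightarrow> nat \<Rightarrow> bool" where
  "alg2_update E f \<alpha> gi msg x i t \<longleftrightarrow>
     (let m = card (in_nbrs E i) in
      \<exists>\<sigma> d. bij_betw \<sigma> {..<m} (in_nbrs E i) \<and>
        (\<forall>a b. a \<le> b \<and> b < m \<longrightarrow> msg t (\<sigma> a) i \<le> msg t (\<sigma> b) i) \<and>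
        subgradient gi (x i (t - 1)) d \<and>
        (let Nstar = \<sigma> ` {f..<m - f} in
          x i t = (x i (t - 1) + (\<Sum>j\<in>Nstar. msg t j i)) / (real (card Nstar) + 1)
                  - \<alpha> (t - 1) * d))"

text \<open>An execution of Algorithm 2: x i t is the state of agent i after iteration t.\<close>
definition alg2_exec ::
  "nat set \<Rightarrow> (nat \<times> nat) set \<Rightarrow> nat \<Rightarrow> nat set \<Rightarrow> (nat \<Rightarrow> real) \<Rightarrow> (nat \<Rightarrow> real \<Rightarrow> real)
   \<Rightarrow> (nat \<Rightarrow> nat \<Rightarrow> nat \<Rightarrow> real) \<Rightarrow> (nat \<Rightarrow> nat \<Rightarrow> real) \<Rightarrow> bool" where
  "alg2_exec V E f F \<alpha> g msg x \<longleftrightarrow>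
     (\<forall>t\<ge>1. \<forall>j\<in>V - F. \<forall>i. msg t j i = x j (t - 1)) \<and>
     (\<forall>t\<ge>1. \<forall>i\<in>V - F. alg2_update E f \<alpha> (g i) msg x i t)"

end

theory Submission
  imports Defs
begin

definition big :: "(nat \<times> nat) set \<Rightarrow> nat \<Rightarrow> nat set \<Rightarrow> nat \<Rightarrow> bool" where
  "big E f S i \<longleftrightarrow> f + 1 \<le> card (in_nbrs E i \<inter> S)"

lemma closed_rtrancl:
  assumes "(s, u) \<in> E'\<^sup>*" "u \<in> R" "\<forall>a b. (a, b) \<in> E' \<and> b \<in> R \<longrightarrow> a \<in> R"
  shows "s \<in> R"
  using assms(1,2)
proof (induction rule: converse_rtrancl_induct)
  case base then show ?case by simp
next
  case (step y z) then show ?case using assms(3) by blast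
qed

lemma in_nbrs_sub:
  assumes "E \<subseteq> {1..n} \<times> {1..n}"
  shows "in_nbrs E i \<subseteq> {1..n}"
  using assms unfolding in_nbrs_def by auto

lemma src_nonempty:
  assumes "condition1 V E f sp" "F' \<subseteq> V" "card F' \<le> f" "reduced_graph V E f F' E'"
  shows "\<exists>s. s \<in> source_component (V - F') E'"
proof -
  have "card (source_component (V - F') E') \<ge> f + 1"
    using assms unfolding condition1_def by auto
  then have "source_component (V - F') E' \<noteq> {}" by auto
  then show ?thesis by auto
qed

lemma G1:
  assumes E: "E \<subseteq> {1..n} \<times> {1..n}" and F: "F \<subseteq> {1..n}" "card F \<le> f"
    and C: "condition1 {1..n} E f sp"
    and N: "N = {1..n} - F"
    and sub: "Lo \<subseteq> N" "Hi \<subseteq> N" "Lo \<union> Hi = N" "Lo \<noteq> N" "Hi \<noteq> N"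
  shows "(\<exists>i\<in>N - Lo. big E f Lo i) \<or> (\<exists>i\<in>N - Hi. big E f Hi i)"
proof (rule ccontr)
  assume nb: "\<not> ?thesis"
  define E' where "E' = {(a,b). (a,b) \<in> E \<and> a \<in> N \<and> b \<in> N \<and> \<not>(a \<in> Lo \<and> b \<notin> Lo) \<and> \<not>(a \<in> Hi \<and> b \<notin> Hi)}"
  have red: "reduced_graph {1..n} E f F E'"
    unfolding reduced_graph_def
  proof (intro conjI ballI)
    show "E' \<subseteq> E \<inter> (({1..n} - F) \<times> ({1..n} - F))" unfolding E'_def N by auto
  next
    fix i assume i: "i \<in> {1..n} - F"
    let ?R = "{j \<in> {1..n} - F. (j, i) \<in> E} - {j. (j, i) \<in> E'}"
    have fin: "finite (in_nbrs E i \<inter> Lo)" "finite (in_nbrs E i \<inter> Hi)"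
      using in_nbrs_sub[OF E] by (auto intro: finite_subset)
    show "card ?R \<le> f"
    proof (cases "i \<in> Lo")
      case True
      show ?thesis
      proof (cases "i \<in> Hi")
        case True
        have "?R = {}" using \<open>i \<in> Lo\<close> True i unfolding E'_def N by auto
        then show ?thesis by (simp only: card.empty le0)
      next
        case False
        have "?R \<subseteq> in_nbrs E i \<inter> Hi" using \<open>i \<in> Lo\<close> False i unfolding E'_def N in_nbrs_def by auto
        moreover have "\<not> big E f Hi i" using nb False i N by auto
        ultimately show ?thesis using card_mono[OF fin(2), of ?R] unfolding big_def
          by linarith
      qed
    next
      case False
      have "i \<in> Hi" using False i sub N by auto
      have "?R \<subseteq> in_nbrs E i \<inter> Lo" using \<open>i \<in> Hi\<close> False i unfolding E'_def N in_nbrs_def by auto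
      moreover have "\<not> big E f Lo i" using nb False i N by auto
      ultimately show ?thesis using card_mono[OF fin(1), of ?R] unfolding big_def
        by linarith
    qed
  qed
  obtain s where s: "s \<in> source_component ({1..n} - F) E'"
    using src_nonempty[OF C F(1) F(2) red] by auto
  obtain u1 where u1: "u1 \<in> N" "u1 \<notin> Lo" using sub by auto
  obtain u2 where u2: "u2 \<in> N" "u2 \<notin> Hi" using sub by auto
  have r1: "(s, u1) \<in> E'\<^sup>*" using s u1 N unfolding source_component_def by auto
  have r2: "(s, u2) \<in> E'\<^sup>*" using s u2 N unfolding source_component_def by auto
  have "s \<in> -Lo" by (rule closed_rtrancl[OF r1]) (use u1 in \<open>auto simp: E'_def\<close>)
  moreover have "s \<in> -Hi" by (rule closed_rtrancl[OF r2]) (use u2 in \<open>auto simp: E'_def\<close>)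
  moreover have "s \<in> N" using s N unfolding source_component_def by auto
  ultimately show False using sub by auto
qed

lemma sp_le:
  assumes E: "E \<subseteq> {1..n} \<times> {1..n}" and F: "F \<subseteq> {1..n}" "card F \<le> f"
    and C: "condition1 {1..n} E f sp"
  shows "sp \<le> card ({1..n} - F)"
proof -
  define E' where "E' = E \<inter> (({1..n} - F) \<times> ({1..n} - F))"
  have red: "reduced_graph {1..n} E f F E'"
    unfolding reduced_graph_def
  proof (intro conjI ballI)
    fix i assume "i \<in> {1..n} - F"
    have "{j \<in> {1..n} - F. (j, i) \<in> E} - {j. (j, i) \<in> E'} = {}" using \<open>i \<in> {1..n} - F\<close> unfolding E'_def by auto
    then show "card ({j \<in> {1..n} - F. (j, i) \<in> E} - {j. (j, i) \<in> E'}) \<le> f" by (simp only: card.empty le0)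
  qed (auto simp: E'_def)
  have "card (source_component ({1..n} - F) E') \<ge> sp"
    using C F red unfolding condition1_def by auto
  moreover have "card (source_component ({1..n} - F) E') \<le> card ({1..n} - F)"
    by (rule card_mono) (auto simp: source_component_def)
  ultimately show ?thesis by simp
qed

lemma G2:
  assumes E: "E \<subseteq> {1..n} \<times> {1..n}" and F: "F \<subseteq> {1..n}" "card F \<le> f"
    and C: "condition1 {1..n} E f sp"
    and N: "N = {1..n} - F"
    and cp: "cols_pos k n A sp" and j0: "j0 \<in> {1..k}"
    and Apos: "\<forall>j\<in>{1..k}. \<forall>i\<in>{1..n}. A j i \<ge> 0"
    and sub: "{i\<in>N. A j0 i > 0} \<subseteq> Lc" "Lc \<subseteq> N" "Lc \<noteq> N"
  shows "\<exists>i\<in>N - Lc. big E f Lc i"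
proof (rule ccontr)
  assume nb: "\<not> ?thesis"
  define E' where "E' = {(a,b). (a,b) \<in> E \<and> a \<in> N \<and> b \<in> N \<and> \<not>(a \<in> Lc \<and> b \<notin> Lc)}"
  have red: "reduced_graph {1..n} E f F E'"
    unfolding reduced_graph_def
  proof (intro conjI ballI)
    show "E' \<subseteq> E \<inter> (({1..n} - F) \<times> ({1..n} - F))" unfolding E'_def N by auto
  next
    fix i assume i: "i \<in> {1..n} - F"
    let ?R = "{j \<in> {1..n} - F. (j, i) \<in> E} - {j. (j, i) \<in> E'}"
    have fin: "finite (in_nbrs E i \<inter> Lc)"
      using in_nbrs_sub[OF E] by (auto intro: finite_subset)
    show "card ?R \<le> f"
    proof (cases "i \<in> Lc")
      case True
      have "?R = {}" using True i unfolding E'_def N by auto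
      then show ?thesis by (simp only: card.empty le0)
    next
      case False
      have "?R \<subseteq> in_nbrs E i \<inter> Lc" using False i unfolding E'_def N in_nbrs_def by auto
      moreover have "\<not> big E f Lc i" using nb False i N by auto
      ultimately show ?thesis using card_mono[OF fin, of ?R] unfolding big_def
        by linarith
    qed
  qed
  let ?SC = "source_component ({1..n} - F) E'"
  have csc: "card ?SC \<ge> sp" using C F red unfolding condition1_def by auto
  obtain u1 where u1: "u1 \<in> N" "u1 \<notin> Lc" using sub by auto
  have scsub: "?SC \<subseteq> N - Lc"
  proof
    fix s assume s: "s \<in> ?SC"
    have r1: "(s, u1) \<in> E'\<^sup>*" using s u1 N unfolding source_component_def by auto
    have "s \<in> -Lc" by (rule closed_rtrancl[OF r1]) (use u1 in \<open>auto simp: E'_def\<close>)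
    then show "s \<in> N - Lc" using s N unfolding source_component_def by auto
  qed
  obtain T where T: "T \<subseteq> ?SC" "card T = sp" "finite T"
    using obtain_subset_with_card_n[OF csc] by blast
  have Tsub: "T \<subseteq> {1..n}" using T scsub N by auto
  have "(\<Sum>i\<in>T. A j0 i) > 0" using cp T(2) Tsub j0 unfolding cols_pos_def by blast
  moreover have "\<forall>i\<in>T. A j0 i = 0"
  proof
    fix i assume "i \<in> T"
    then have iN: "i \<in> N" "i \<notin> Lc" using T scsub by auto
    have "\<not> A j0 i > 0" using sub(1) iN by blast
    moreover have "A j0 i \<ge> 0" using Apos j0 iN N by auto
    ultimately show "A j0 i = 0" by linarith
  qed
  ultimately show False by simp
qed

lemma G0:
  assumes E: "E \<subseteq> {1..n} \<times> {1..n}" and nl: "\<forall>i. (i, i) \<notin> E"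
    and C: "condition1 {1..n} E f sp" and i: "i \<in> {1..n}"
    and m: "f + 1 \<le> card (in_nbrs E i)"
  shows "2 * f + 1 \<le> card (in_nbrs E i)"
proof (cases "f = 0")
  case True then show ?thesis using m by simp
next
  case False
  show ?thesis
  proof (rule ccontr)
    assume "\<not> ?thesis"
    then have m2: "card (in_nbrs E i) \<le> 2 * f" by simp
    have fin: "finite (in_nbrs E i)" using in_nbrs_sub[OF E] by (auto intro: finite_subset)
    have "f \<le> card (in_nbrs E i)" using m by simp
    then obtain F' where F': "F' \<subseteq> in_nbrs E i" "card F' = f" "finite F'"
      using obtain_subset_with_card_n by blast
    have iF': "i \<notin> F'" using F' nl unfolding in_nbrs_def by auto
    define E' where "E' = {(a,b). (a,b) \<in> E \<and> a \<notin> F' \<and> b \<notin> F' \<and> b \<noteq> i}"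
    have red: "reduced_graph {1..n} E f F' E'"
      unfolding reduced_graph_def
    proof (intro conjI ballI)
      show "E' \<subseteq> E \<inter> (({1..n} - F') \<times> ({1..n} - F'))" unfolding E'_def using E by auto
    next
      fix v assume v: "v \<in> {1..n} - F'"
      let ?R = "{j \<in> {1..n} - F'. (j, v) \<in> E} - {j. (j, v) \<in> E'}"
      show "card ?R \<le> f"
      proof (cases "v = i")
        case True
        have "?R \<subseteq> in_nbrs E i - F'" using True unfolding in_nbrs_def by auto
        then have "card ?R \<le> card (in_nbrs E i - F')" using fin by (meson card_mono finite_Diff)
        also have "\<dots> = card (in_nbrs E i) - f" using F' fin by (simp add: card_Diff_subset)
        finally show ?thesis using m2 by simp
      next
        case False
        have "?R = {}" using False v unfolding E'_def by auto
        then show ?thesis by (simp only: card.empty le0)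
      qed
    qed
    have F'V: "F' \<subseteq> {1..n}" using F' in_nbrs_sub[OF E] by auto
    have "card (source_component ({1..n} - F') E') \<ge> max (f + 1) sp"
      using C F'V red \<open>card F' = f\<close> unfolding condition1_def by (simp add: \<open>card F' = f\<close>)
    then have csc: "card (source_component ({1..n} - F') E') \<ge> f + 1" by simp
    then have "card (source_component ({1..n} - F') E') \<ge> 2" using False by simp
    then obtain T where T: "T \<subseteq> source_component ({1..n} - F') E'" "card T = 2" "finite T"
      using obtain_subset_with_card_n by blast
    then obtain a b where ab: "T = {a, b}" "a \<noteq> b" by (auto simp: card_2_iff)
    obtain s where s: "s \<in> T" "s \<noteq> i"
    proof (cases "a = i")
      case True then show ?thesis using that[of b] ab by auto
    next
      case False then show ?thesis using that[of a] ab by auto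
    qed
    have "(s, i) \<in> E'\<^sup>*" using s T i iF' unfolding source_component_def by auto
    then have "s \<in> {i}" by (rule closed_rtrancl) (auto simp: E'_def)
    then show False using s by simp
  qed
qed

definition stepok :: "nat set \<Rightarrow> (nat set \<Rightarrow> nat \<Rightarrow> bool) \<Rightarrow> nat \<Rightarrow> (nat \<Rightarrow> real) \<Rightarrow> real \<Rightarrow> nat \<Rightarrow> bool" where
  "stepok N bg n xo a i \<longleftrightarrow> (\<forall>C. (\<forall>j\<in>N. xo j \<le> C) \<longrightarrow> a \<le> C) \<and>
     (\<forall>S c C. S \<subseteq> N \<and> (\<forall>j\<in>S. xo j \<le> c) \<and> (i \<in> S \<or> bg S i) \<and> (\<forall>j\<in>N. xo j \<le> C) \<and> c \<le> C
        \<longrightarrow> a \<le> C - (C - c) / (real n + 1))"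

lemma trim_up:
  fixes w :: "nat \<Rightarrow> real"
  assumes mono: "\<forall>a b. a \<le> b \<and> b < m \<longrightarrow> w a \<le> w b" and B: "B \<subseteq> {..<m}" "card B \<le> f"
    and p: "p < m - f" and good: "\<forall>b<m. b \<notin> B \<longrightarrow> w b \<le> C"
  shows "w p \<le> C"
proof -
  have finB: "finite B" using B(1) finite_subset by blast
  have "\<not> {p..<m} \<subseteq> B"
  proof
    assume "{p..<m} \<subseteq> B"
    then have "card {p..<m} \<le> card B" using finB by (rule card_mono[rotated])
    then show False using p B(2) by simp
  qed
  then obtain b where b: "b \<in> {p..<m}" "b \<notin> B" by blast
  then have "w p \<le> w b" using mono by simp
  also have "w b \<le> C" using good b by simp
  finally show ?thesis .
qed

lemma trim_low:
  fixes w :: "nat \<Rightarrow> real"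
  assumes mono: "\<forall>a b. a \<le> b \<and> b < m \<longrightarrow> w a \<le> w b" and B: "B \<subseteq> {..<m}" "card B \<le> f"
    and p: "f \<le> p" "p < m" and good: "\<forall>b<m. b \<notin> B \<longrightarrow> C \<le> w b"
  shows "C \<le> w p"
proof -
  have finB: "finite B" using B(1) finite_subset by blast
  have "\<not> {..p} \<subseteq> B"
  proof
    assume "{..p} \<subseteq> B"
    then have "card {..p} \<le> card B" using finB by (rule card_mono[rotated])
    then show False using p B(2) by simp
  qed
  then obtain b where b: "b \<in> {..p}" "b \<notin> B" by blast
  then have "C \<le> w b" using good p by simp
  also have "w b \<le> w p" using mono b p by simp
  finally show ?thesis .
qed

lemma trim_big_low:
  fixes w :: "nat \<Rightarrow> real"
  assumes mono: "\<forall>a b. a \<le> b \<and> b < m \<longrightarrow> w a \<le> w b" and P: "P \<subseteq> {..<m}" "f + 1 \<le> card P"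
    and good: "\<forall>b\<in>P. w b \<le> c"
  shows "w f \<le> c"
proof -
  have "\<not> P \<subseteq> {..<f}"
  proof
    assume "P \<subseteq> {..<f}"
    then have "card P \<le> card {..<f}" by (rule card_mono[rotated]) simp
    then show False using P(2) by simp
  qed
  then obtain b where b: "b \<in> P" "f \<le> b" by (meson lessThan_iff not_le subsetI)
  then have "w f \<le> w b" using mono P(1) by auto
  also have "w b \<le> c" using good b by simp
  finally show ?thesis .
qed

lemma trim_big_up:
  fixes w :: "nat \<Rightarrow> real"
  assumes mono: "\<forall>a b. a \<le> b \<and> b < m \<longrightarrow> w a \<le> w b" and P: "P \<subseteq> {..<m}" "f + 1 \<le> card P"
    and good: "\<forall>b\<in>P. c \<le> w b" and fm: "f < m"
  shows "c \<le> w (m - f - 1)"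
proof -
  have "\<not> P \<subseteq> {m - f..<m}"
  proof
    assume "P \<subseteq> {m - f..<m}"
    then have "card P \<le> card {m - f..<m}" by (rule card_mono[rotated]) simp
    then show False using P(2) fm by simp
  qed
  then obtain b where b: "b \<in> P" "b < m - f" using P(1) by (meson atLeastLessThan_iff lessThan_iff not_le subsetD subsetI)
  then have "c \<le> w b" using good by simp
  also have "w b \<le> w (m - f - 1)" using mono b fm by auto
  finally show ?thesis .
qed

lemma avg_up:
  fixes w :: "nat \<Rightarrow> real"
  assumes I: "finite I" and up: "\<forall>p\<in>I. w p \<le> C" and own: "own \<le> C"
    and low: "own \<le> c \<or> (\<exists>p\<in>I. w p \<le> c)" and cC: "c \<le> C" and cI: "card I \<le> n"
  shows "(own + (\<Sum>p\<in>I. w p)) / (real (card I) + 1) \<le> C - (C - c) / (real n + 1)"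
proof -
  have key: "own + (\<Sum>p\<in>I. w p) \<le> (real (card I) + 1) * C - (C - c)"
  proof (cases "own \<le> c")
    case True
    have "(\<Sum>p\<in>I. w p) \<le> (\<Sum>p\<in>I. C)" using up by (intro sum_mono) auto
    then have "(\<Sum>p\<in>I. w p) \<le> real (card I) * C" by simp
    then show ?thesis using True by (simp add: algebra_simps)
  next
    case False
    then obtain p0 where p0: "p0 \<in> I" "w p0 \<le> c" using low by auto
    have "(\<Sum>p\<in>I. w p) = w p0 + (\<Sum>p\<in>I - {p0}. w p)" using p0 I by (simp add: sum.remove)
    also have "(\<Sum>p\<in>I - {p0}. w p) \<le> (\<Sum>p\<in>I - {p0}. C)" using up by (intro sum_mono) auto
    also have "\<dots> = real (card I - 1) * C" using p0 I by simp
    also have "real (card I - 1) = real (card I) - 1" using p0 I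
      by (metis One_nat_def card_gt_0_iff empty_iff of_nat_diff less_eq_Suc_le of_nat_1)
    finally have "(\<Sum>p\<in>I. w p) \<le> w p0 + (real (card I) - 1) * C" by simp
    then show ?thesis using p0 own by (simp add: algebra_simps)
  qed
  have pos: "real (card I) + 1 > 0" by simp
  have "(own + (\<Sum>p\<in>I. w p)) / (real (card I) + 1) \<le> ((real (card I) + 1) * C - (C - c)) / (real (card I) + 1)"
    using key pos by (simp add: divide_right_mono)
  also have "\<dots> = C - (C - c) / (real (card I) + 1)" using pos by (simp add: field_simps)
  finally have f1: "(own + (\<Sum>p\<in>I. w p)) / (real (card I) + 1) \<le> C - (C - c) / (real (card I) + 1)" .
  have "(C - c) / (real (card I) + 1) \<ge> (C - c) / (real n + 1)"
    using cC cI by (intro divide_left_mono) auto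
  then show ?thesis using f1 by linarith
qed

lemma alg_step:
  assumes E: "E \<subseteq> {1..n} \<times> {1..n}" and nl: "\<forall>i. (i,i) \<notin> E"
    and F: "F \<subseteq> {1..n}" "card F \<le> f" and C: "condition1 {1..n} E f sp"
    and N: "N = {1..n} - F" and i: "i \<in> N"
    and upd: "alg2_update E f \<alpha> gi msg x i t"
    and msgs: "\<forall>j\<in>N. msg t j i = x j (t - 1)"
  shows "\<exists>a d. x i t = a - \<alpha> (t - 1) * d \<and> subgradient gi (x i (t - 1)) d \<and>
     stepok N (big E f) n (\<lambda>j. x j (t - 1)) a i \<and> stepok N (big E f) n (\<lambda>j. - x j (t - 1)) (- a) i"
proof -
  define m where "m = card (in_nbrs E i)"
  obtain \<sigma> d where bij: "bij_betw \<sigma> {..<m} (in_nbrs E i)"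
    and mono: "\<forall>a b. a \<le> b \<and> b < m \<longrightarrow> msg t (\<sigma> a) i \<le> msg t (\<sigma> b) i"
    and sg: "subgradient gi (x i (t-1)) d"
    and xe: "x i t = (x i (t-1) + (\<Sum>j\<in>\<sigma> ` {f..<m-f}. msg t j i)) / (real (card (\<sigma> ` {f..<m-f})) + 1) - \<alpha> (t-1) * d"
    using upd unfolding alg2_update_def Let_def m_def[symmetric] by blast
  define I where "I = {f..<m-f}"
  define w where "w p = msg t (\<sigma> p) i" for p
  have inj: "inj_on \<sigma> {..<m}" using bij bij_betw_def by blast
  have injI: "inj_on \<sigma> I" using inj unfolding I_def by (rule inj_on_subset) auto
  have sumeq: "(\<Sum>j\<in>\<sigma> ` I. msg t j i) = (\<Sum>p\<in>I. w p)" using injI by (simp add: sum.reindex w_def)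
  have cardeq: "card (\<sigma> ` I) = card I" using injI by (simp add: card_image)
  define a where "a = (x i (t-1) + (\<Sum>p\<in>I. w p)) / (real (card I) + 1)"
  have xe': "x i t = (x i (t-1) + (\<Sum>j\<in>\<sigma> ` I. msg t j i)) / (real (card (\<sigma> ` I)) + 1) - \<alpha> (t-1) * d"
    using xe unfolding I_def .
  have xa: "x i t = a - \<alpha> (t-1) * d" using xe' unfolding a_def by (simp only: sumeq cardeq)
  have img: "\<sigma> ` {..<m} = in_nbrs E i" using bij by (simp add: bij_betw_def)
  have inV: "\<forall>b<m. \<sigma> b \<in> {1..n}"
  proof (intro allI impI)
    fix b assume "b < m"
    then have "\<sigma> b \<in> \<sigma> ` {..<m}" by simp
    then have "\<sigma> b \<in> in_nbrs E i" by (simp only: img)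
    then show "\<sigma> b \<in> {1..n}" by (rule subsetD[OF in_nbrs_sub[OF E]])
  qed
  define B where "B = {b \<in> {..<m}. \<sigma> b \<in> F}"
  have Bsub: "B \<subseteq> {..<m}" unfolding B_def by auto
  have cardB: "card B \<le> f"
  proof -
    have "card B = card (\<sigma> ` B)" using inj_on_subset[OF inj Bsub] by (simp add: card_image)
    also have "\<dots> \<le> card F"
    proof (rule card_mono)
      show "finite F" using F(1) by (rule finite_subset) simp
      show "\<sigma> ` B \<subseteq> F" unfolding B_def by blast
    qed
    finally show ?thesis using F(2) by simp
  qed
  have goodval: "\<forall>b<m. b \<notin> B \<longrightarrow> \<sigma> b \<in> N \<and> w b = x (\<sigma> b) (t-1)"
  proof (intro allI impI)
    fix b assume b: "b < m" "b \<notin> B"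
    have "\<sigma> b \<in> N" using b inV N unfolding B_def by blast
    moreover then have "w b = x (\<sigma> b) (t-1)" using msgs unfolding w_def by blast
    ultimately show "\<sigma> b \<in> N \<and> w b = x (\<sigma> b) (t-1)" by blast
  qed
  have monow: "\<forall>a b. a \<le> b \<and> b < m \<longrightarrow> w a \<le> w b" using mono unfolding w_def by simp
  have finI: "finite I" unfolding I_def by simp
  have finN: "finite (in_nbrs E i)" using in_nbrs_sub[OF E] by (rule finite_subset) simp
  have mn: "m \<le> n"
  proof -
    have "m \<le> card {1..n}" unfolding m_def using in_nbrs_sub[OF E] by (intro card_mono) auto
    then show ?thesis by simp
  qed
  have cardI: "card I \<le> n" unfolding I_def using mn by simp
  have iV: "i \<in> {1..n}" using i N by simp
  have bigpos: "\<exists>P. P \<subseteq> {..<m} \<and> f + 1 \<le> card P \<and> (\<forall>b\<in>P. \<sigma> b \<in> S) \<and> 2*f+1 \<le> m"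
    if bg: "big E f S i" for S
  proof -
    define P where "P = {b \<in> {..<m}. \<sigma> b \<in> S}"
    have Psub: "P \<subseteq> {..<m}" unfolding P_def by auto
    have "\<sigma> ` P = in_nbrs E i \<inter> S"
    proof
      show "\<sigma> ` P \<subseteq> in_nbrs E i \<inter> S" using img unfolding P_def by blast
      show "in_nbrs E i \<inter> S \<subseteq> \<sigma> ` P"
      proof
        fix j assume j: "j \<in> in_nbrs E i \<inter> S"
        then obtain b where "b \<in> {..<m}" "j = \<sigma> b" using img by (metis IntD1 imageE)
        then show "j \<in> \<sigma> ` P" using j unfolding P_def by blast
      qed
    qed
    moreover have "card (\<sigma> ` P) = card P" using inj_on_subset[OF inj Psub] by (simp add: card_image)
    ultimately have cP: "card P = card (in_nbrs E i \<inter> S)" by simp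
    have c1: "f + 1 \<le> card P" using bg cP unfolding big_def by simp
    have "card (in_nbrs E i \<inter> S) \<le> m" unfolding m_def using finN by (intro card_mono) auto
    then have "f + 1 \<le> m" using c1 cP by simp
    then have "2*f+1 \<le> m" using G0[OF E nl C iV] unfolding m_def by simp
    moreover have "\<forall>b\<in>P. \<sigma> b \<in> S" unfolding P_def by blast
    ultimately show ?thesis using Psub c1 by blast
  qed
  have up_all: "\<forall>p\<in>I. w p \<le> Cc" if h: "\<forall>j\<in>N. x j (t-1) \<le> Cc" for Cc
  proof
    fix p assume "p \<in> I"
    then have p: "p < m - f" unfolding I_def by simp
    show "w p \<le> Cc" by (rule trim_up[OF monow Bsub cardB p]) (use goodval h in auto)
  qed
  have low_all: "\<forall>p\<in>I. Cc \<le> w p" if h: "\<forall>j\<in>N. Cc \<le> x j (t-1)" for Cc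
  proof
    fix p assume "p \<in> I"
    then have p: "f \<le> p" "p < m" unfolding I_def by auto
    show "Cc \<le> w p" by (rule trim_low[OF monow Bsub cardB p]) (use goodval h in auto)
  qed
  have s1: "stepok N (big E f) n (\<lambda>j. x j (t-1)) a i"
    unfolding stepok_def
  proof (intro conjI allI impI)
    fix Cc assume h: "\<forall>j\<in>N. x j (t-1) \<le> Cc"
    have own: "x i (t-1) \<le> Cc" using h i by simp
    have "a \<le> Cc - (Cc - Cc)/(real n + 1)" unfolding a_def
      by (rule avg_up[OF finI up_all[OF h] own _ order_refl cardI]) (use own in simp)
    then show "a \<le> Cc" by simp
  next
    fix S c Cc assume h: "S \<subseteq> N \<and> (\<forall>j\<in>S. x j (t-1) \<le> c) \<and> (i \<in> S \<or> big E f S i) \<and> (\<forall>j\<in>N. x j (t-1) \<le> Cc) \<and> c \<le> Cc"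
    have own: "x i (t-1) \<le> Cc" using h i by simp
    have low: "x i (t-1) \<le> c \<or> (\<exists>p\<in>I. w p \<le> c)"
    proof (cases "i \<in> S")
      case True then show ?thesis using h by auto
    next
      case False
      then have bg: "big E f S i" using h by auto
      obtain P where P: "P \<subseteq> {..<m}" "f+1 \<le> card P" "\<forall>b\<in>P. \<sigma> b \<in> S" "2*f+1 \<le> m"
        using bigpos[OF bg] by blast
      have "\<forall>b\<in>P. w b \<le> c"
      proof
        fix b assume "b \<in> P"
        then have "\<sigma> b \<in> S" using P by auto
        then show "w b \<le> c" using h msgs unfolding w_def by auto
      qed
      then have "w f \<le> c" by (rule trim_big_low[OF monow P(1) P(2)])
      moreover have "f \<in> I" using P(4) unfolding I_def by simp
      ultimately show ?thesis by blast
    qed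
    have cC: "c \<le> Cc" using h by simp
    have up: "\<forall>p\<in>I. w p \<le> Cc" using up_all h by blast
    show "a \<le> Cc - (Cc - c)/(real n + 1)" unfolding a_def
      by (rule avg_up[OF finI up own low cC cardI])
  qed
  have na: "- a = (- x i (t-1) + (\<Sum>p\<in>I. - w p)) / (real (card I) + 1)"
    unfolding a_def by (simp add: sum_negf minus_divide_left)
  have s2: "stepok N (big E f) n (\<lambda>j. - x j (t-1)) (- a) i"
    unfolding stepok_def
  proof (intro conjI allI impI)
    fix Cc assume h: "\<forall>j\<in>N. - x j (t-1) \<le> Cc"
    have h': "\<forall>j\<in>N. - Cc \<le> x j (t-1)" using h by force
    have own: "- x i (t-1) \<le> Cc" using h i by simp
    have up: "\<forall>p\<in>I. - w p \<le> Cc" using low_all[OF h'] by force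
    have "- a \<le> Cc - (Cc - Cc)/(real n + 1)" unfolding na
      by (rule avg_up[OF finI up own _ order_refl cardI]) (use own in simp)
    then show "- a \<le> Cc" by simp
  next
    fix S c Cc assume h: "S \<subseteq> N \<and> (\<forall>j\<in>S. - x j (t-1) \<le> c) \<and> (i \<in> S \<or> big E f S i) \<and> (\<forall>j\<in>N. - x j (t-1) \<le> Cc) \<and> c \<le> Cc"
    have own: "- x i (t-1) \<le> Cc" using h i by simp
    have h': "\<forall>j\<in>N. - Cc \<le> x j (t-1)" using h by force
    have low: "- x i (t-1) \<le> c \<or> (\<exists>p\<in>I. - w p \<le> c)"
    proof (cases "i \<in> S")
      case True then show ?thesis using h by auto
    next
      case False
      then have bg: "big E f S i" using h by auto
      obtain P where P: "P \<subseteq> {..<m}" "f+1 \<le> card P" "\<forall>b\<in>P. \<sigma> b \<in> S" "2*f+1 \<le> m"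
        using bigpos[OF bg] by blast
      have "\<forall>b\<in>P. - c \<le> w b"
      proof
        fix b assume "b \<in> P"
        then have "\<sigma> b \<in> S" using P by auto
        then have "- x (\<sigma> b) (t-1) \<le> c" "\<sigma> b \<in> N" using h by auto
        then show "- c \<le> w b" using msgs unfolding w_def by auto
      qed
      then have "- c \<le> w (m - f - 1)" by (rule trim_big_up[OF monow P(1) P(2)]) (use P(4) in simp)
      moreover have "m - f - 1 \<in> I" unfolding I_def atLeastLessThan_iff using P(4) by arith
      ultimately show ?thesis by force
    qed
    have cC: "c \<le> Cc" using h by simp
    have up: "\<forall>p\<in>I. - w p \<le> Cc" using low_all[OF h'] by force
    show "- a \<le> Cc - (Cc - c)/(real n + 1)" unfolding na
      by (rule avg_up[OF finI up own low cC cardI])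
  qed
  show ?thesis using xa sg s1 s2 by blast
qed

lemma stepok_up: "stepok N bg n xo a i \<Longrightarrow> \<forall>j\<in>N. xo j \<le> C \<Longrightarrow> a \<le> C"
  unfolding stepok_def by blast

lemma stepok_grow: "stepok N bg n xo a i \<Longrightarrow> S \<subseteq> N \<Longrightarrow> \<forall>j\<in>S. xo j \<le> c \<Longrightarrow> i \<in> S \<or> bg S i
  \<Longrightarrow> \<forall>j\<in>N. xo j \<le> C \<Longrightarrow> c \<le> C \<Longrightarrow> a \<le> C - (C - c) / (real n + 1)"
  unfolding stepok_def by blast

lemma cons_block:
  fixes x a dd :: "nat \<Rightarrow> nat \<Rightarrow> real" and \<alpha> :: "nat \<Rightarrow> real"
  assumes finN: "finite N" and cN: "card N \<le> n"
    and step: "\<forall>t\<ge>1. \<forall>i\<in>N. x i t = a i t - \<alpha> (t-1) * dd i t \<and> stepok N bg n (\<lambda>j. x j (t-1)) (a i t) i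
                 \<and> stepok N bg n (\<lambda>j. - x j (t-1)) (- a i t) i"
    and ddL: "\<forall>t\<ge>1. \<forall>i\<in>N. \<bar>dd i t\<bar> \<le> L"
    and apos: "\<forall>t. \<alpha> t \<ge> 0"
    and G: "\<forall>Lo Hi. Lo \<subseteq> N \<and> Hi \<subseteq> N \<and> Lo \<union> Hi = N \<and> Lo \<noteq> N \<and> Hi \<noteq> N
              \<longrightarrow> (\<exists>i\<in>N - Lo. bg Lo i) \<or> (\<exists>i\<in>N - Hi. bg Hi i)"
    and init: "\<forall>i\<in>N. lo \<le> x i t0 \<and> x i t0 \<le> hi" and lh: "lo \<le> hi"
  shows "(\<forall>i\<in>N. lo - L * (\<Sum>u<n. \<alpha> (t0+u)) \<le> x i (t0+n) \<and>
               x i (t0+n) \<le> hi + L * (\<Sum>u<n. \<alpha> (t0+u)) - (hi - lo)/2/(real n + 1)^n) \<or>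
         (\<forall>i\<in>N. lo - L * (\<Sum>u<n. \<alpha> (t0+u)) + (hi - lo)/2/(real n + 1)^n \<le> x i (t0+n) \<and>
               x i (t0+n) \<le> hi + L * (\<Sum>u<n. \<alpha> (t0+u)))"
proof -
  define P where "P s = L * (\<Sum>u<s. \<alpha> (t0+u))" for s
  define ep where "ep s = (hi - lo)/2/(real n + 1)^s" for s
  define Lo where "Lo s = {i\<in>N. x i (t0+s) \<le> hi + P s - ep s}" for s
  define Hi where "Hi s = {i\<in>N. lo - P s + ep s \<le> x i (t0+s)}" for s
  have epn: "ep s \<ge> 0" for s unfolding ep_def using lh by simp
  have epS: "ep (Suc s) = ep s / (real n + 1)" for s unfolding ep_def by (simp add: field_simps)
  have PS: "P (Suc s) = P s + L * \<alpha> (t0 + s)" for s unfolding P_def by (simp add: algebra_simps)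
  have LoN: "Lo s \<subseteq> N" for s unfolding Lo_def by blast
  have HiN: "Hi s \<subseteq> N" for s unfolding Hi_def by blast
  have inv: "(\<forall>i\<in>N. lo - P s \<le> x i (t0+s) \<and> x i (t0+s) \<le> hi + P s) \<and> Lo s \<union> Hi s = N \<and>
     (Lo s = N \<or> Hi s = N \<or> card N + s \<le> card (Lo s) + card (Hi s))" for s
  proof (induction s)
    case 0
    have b0: "\<forall>i\<in>N. lo - P 0 \<le> x i (t0+0) \<and> x i (t0+0) \<le> hi + P 0" using init unfolding P_def by simp
    have u0: "Lo 0 \<union> Hi 0 = N"
    proof
      show "Lo 0 \<union> Hi 0 \<subseteq> N" using LoN HiN by blast
      show "N \<subseteq> Lo 0 \<union> Hi 0"
      proof
        fix i assume i: "i \<in> N"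
        have "hi - (hi - lo)/2 = lo + (hi - lo)/2" by (simp add: field_simps)
        then have "x i t0 \<le> hi - (hi - lo)/2 \<or> lo + (hi - lo)/2 \<le> x i t0" by linarith
        then show "i \<in> Lo 0 \<union> Hi 0" using i unfolding Lo_def Hi_def P_def ep_def by simp
      qed
    qed
    have "card N \<le> card (Lo 0) + card (Hi 0)" using card_Un_le[of "Lo 0" "Hi 0"] u0 by simp
    then show ?case using b0 u0 by simp
  next
    case (Suc s)
    have IHb: "\<forall>i\<in>N. lo - P s \<le> x i (t0+s) \<and> x i (t0+s) \<le> hi + P s" using Suc.IH by blast
    have IHu: "Lo s \<union> Hi s = N" using Suc.IH by blast
    have IHc: "Lo s = N \<or> Hi s = N \<or> card N + s \<le> card (Lo s) + card (Hi s)" using Suc.IH by blast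
    define t where "t = t0 + Suc s"
    have t1: "t \<ge> 1" and tm: "t - 1 = t0 + s" unfolding t_def by auto
    have st: "x i t = a i t - \<alpha> (t0+s) * dd i t" "stepok N bg n (\<lambda>j. x j (t0+s)) (a i t) i"
        "stepok N bg n (\<lambda>j. - x j (t0+s)) (- a i t) i" if "i \<in> N" for i
    proof -
      have "x i t = a i t - \<alpha> (t-1) * dd i t \<and> stepok N bg n (\<lambda>j. x j (t-1)) (a i t) i
                 \<and> stepok N bg n (\<lambda>j. - x j (t-1)) (- a i t) i" using step t1 that by blast
      then show "x i t = a i t - \<alpha> (t0+s) * dd i t" "stepok N bg n (\<lambda>j. x j (t0+s)) (a i t) i"
        "stepok N bg n (\<lambda>j. - x j (t0+s)) (- a i t) i" unfolding tm by auto
    qed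
    have dab: "\<bar>\<alpha> (t0+s) * dd i t\<bar> \<le> L * \<alpha> (t0+s)" if "i \<in> N" for i
    proof -
      have "\<bar>\<alpha> (t0+s) * dd i t\<bar> = \<alpha> (t0+s) * \<bar>dd i t\<bar>" using apos by (simp add: abs_mult)
      also have "\<dots> \<le> \<alpha> (t0+s) * L" using ddL t1 that apos by (simp add: mult_left_mono)
      finally show ?thesis by (simp add: mult.commute)
    qed
    have upB: "\<forall>j\<in>N. x j (t0+s) \<le> hi + P s" using IHb by blast
    have loB: "\<forall>j\<in>N. - x j (t0+s) \<le> - (lo - P s)" using IHb by force
    have bnd: "lo - P (Suc s) \<le> x i (t0 + Suc s) \<and> x i (t0 + Suc s) \<le> hi + P (Suc s)" if i: "i \<in> N" for i
    proof -
      have "a i t \<le> hi + P s" by (rule stepok_up[OF st(2)[OF i] upB])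
      moreover have "- a i t \<le> - (lo - P s)" by (rule stepok_up[OF st(3)[OF i] loB])
      ultimately show ?thesis using st(1)[OF i] dab[OF i] PS[of s] unfolding t_def by (simp add: abs_le_iff)
    qed
    have growLo: "i \<in> Lo (Suc s)" if i: "i \<in> N" and h: "i \<in> Lo s \<or> bg (Lo s) i" for i
    proof -
      have ls: "\<forall>j\<in>Lo s. x j (t0+s) \<le> hi + P s - ep s" unfolding Lo_def by blast
      have "a i t \<le> (hi + P s) - ((hi + P s) - (hi + P s - ep s)) / (real n + 1)"
        by (rule stepok_grow[OF st(2)[OF i] LoN ls h upB]) (use epn[of s] in simp)
      then have "a i t \<le> (hi + P s) - ep s / (real n + 1)" by simp
      then have "a i t \<le> hi + P s - ep (Suc s)" using epS[of s] by simp
      then have "x i (t0 + Suc s) \<le> hi + P (Suc s) - ep (Suc s)"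
        using st(1)[OF i] dab[OF i] PS[of s] unfolding t_def by (simp add: abs_le_iff)
      then show ?thesis using i unfolding Lo_def by blast
    qed
    have growHi: "i \<in> Hi (Suc s)" if i: "i \<in> N" and h: "i \<in> Hi s \<or> bg (Hi s) i" for i
    proof -
      have hs: "\<forall>j\<in>Hi s. - x j (t0+s) \<le> - (lo - P s + ep s)" unfolding Hi_def by force
      have "- a i t \<le> (- (lo - P s)) - ((- (lo - P s)) - (- (lo - P s + ep s))) / (real n + 1)"
        by (rule stepok_grow[OF st(3)[OF i] HiN hs h loB]) (use epn[of s] in simp)
      then have "- a i t \<le> (- (lo - P s)) - ep s / (real n + 1)" by simp
      then have "lo - P s + ep (Suc s) \<le> a i t" using epS[of s] by simp
      then have "lo - P (Suc s) + ep (Suc s) \<le> x i (t0 + Suc s)"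
        using st(1)[OF i] dab[OF i] PS[of s] unfolding t_def by (simp add: abs_le_iff)
      then show ?thesis using i unfolding Hi_def by blast
    qed
    have subLo: "Lo s \<subseteq> Lo (Suc s)"
    proof
      fix i assume "i \<in> Lo s" then show "i \<in> Lo (Suc s)" using growLo LoN[of s] by blast
    qed
    have subHi: "Hi s \<subseteq> Hi (Suc s)"
    proof
      fix i assume "i \<in> Hi s" then show "i \<in> Hi (Suc s)" using growHi HiN[of s] by blast
    qed
    have un: "Lo (Suc s) \<union> Hi (Suc s) = N"
    proof
      show "Lo (Suc s) \<union> Hi (Suc s) \<subseteq> N" using LoN[of "Suc s"] HiN[of "Suc s"] by blast
      show "N \<subseteq> Lo (Suc s) \<union> Hi (Suc s)" using subLo subHi IHu by blast
    qed
    have cc: "Lo (Suc s) = N \<or> Hi (Suc s) = N \<or> card N + Suc s \<le> card (Lo (Suc s)) + card (Hi (Suc s))"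
    proof (cases "Lo (Suc s) = N \<or> Hi (Suc s) = N")
      case True then show ?thesis by blast
    next
      case False
      have nLo: "Lo s \<noteq> N"
      proof
        assume "Lo s = N"
        then have "N \<subseteq> Lo (Suc s)" using subLo by simp
        then have "Lo (Suc s) = N" by (rule subset_antisym[OF LoN])
        then show False using False by simp
      qed
      have nHi: "Hi s \<noteq> N"
      proof
        assume "Hi s = N"
        then have "N \<subseteq> Hi (Suc s)" using subHi by simp
        then have "Hi (Suc s) = N" by (rule subset_antisym[OF HiN])
        then show False using False by simp
      qed
      have c0: "card N + s \<le> card (Lo s) + card (Hi s)" using IHc nLo nHi by blast
      have fLo: "finite (Lo (Suc s))" "finite (Hi (Suc s))"
        using finite_subset[OF LoN finN] finite_subset[OF HiN finN] by blast+
      have m1: "card (Lo s) \<le> card (Lo (Suc s))" by (rule card_mono[OF fLo(1) subLo])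
      have m2: "card (Hi s) \<le> card (Hi (Suc s))" by (rule card_mono[OF fLo(2) subHi])
      have "(\<exists>i\<in>N - Lo s. bg (Lo s) i) \<or> (\<exists>i\<in>N - Hi s. bg (Hi s) i)"
        using G[rule_format, of "Lo s" "Hi s"] LoN[of s] HiN[of s] IHu nLo nHi by blast
      then have "card (Lo s) < card (Lo (Suc s)) \<or> card (Hi s) < card (Hi (Suc s))"
      proof
        assume "\<exists>i\<in>N - Lo s. bg (Lo s) i"
        then obtain i where i: "i \<in> N" "i \<notin> Lo s" "bg (Lo s) i" by blast
        then have "i \<in> Lo (Suc s)" using growLo by blast
        then have "Lo s \<noteq> Lo (Suc s)" using i(2) by blast
        then have "Lo s \<subset> Lo (Suc s)" by (rule psubsetI[OF subLo])
        then show ?thesis using psubset_card_mono[OF fLo(1)] by blast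
      next
        assume "\<exists>i\<in>N - Hi s. bg (Hi s) i"
        then obtain i where i: "i \<in> N" "i \<notin> Hi s" "bg (Hi s) i" by blast
        then have "i \<in> Hi (Suc s)" using growHi by blast
        then have "Hi s \<noteq> Hi (Suc s)" using i(2) by blast
        then have "Hi s \<subset> Hi (Suc s)" by (rule psubsetI[OF subHi])
        then show ?thesis using psubset_card_mono[OF fLo(2)] by blast
      qed
      then show ?thesis using c0 m1 m2 by linarith
    qed
    show ?case using bnd un cc by blast
  qed
  have bn: "\<forall>i\<in>N. lo - P n \<le> x i (t0+n) \<and> x i (t0+n) \<le> hi + P n" using inv by blast
  have "Lo n = N \<or> Hi n = N"
  proof (rule ccontr)
    assume c: "\<not> (Lo n = N \<or> Hi n = N)"
    then have "card N + n \<le> card (Lo n) + card (Hi n)" using inv by blast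
    moreover have "card (Lo n) < card N"
    proof -
      have "Lo n \<subset> N" using c LoN[of n] by blast
      then show ?thesis by (rule psubset_card_mono[OF finN])
    qed
    moreover have "card (Hi n) < card N"
    proof -
      have "Hi n \<subset> N" using c HiN[of n] by blast
      then show ?thesis by (rule psubset_card_mono[OF finN])
    qed
    ultimately show False using cN by linarith
  qed
  then show ?thesis
  proof
    assume "Lo n = N"
    then have "\<forall>i\<in>N. x i (t0+n) \<le> hi + P n - ep n" unfolding Lo_def by blast
    then show ?thesis using bn unfolding P_def ep_def by blast
  next
    assume "Hi n = N"
    then have "\<forall>i\<in>N. lo - P n + ep n \<le> x i (t0+n)" unfolding Hi_def by blast
    then show ?thesis using bn unfolding P_def ep_def by blast
  qed
qed

lemma alpha_anti:
  fixes \<alpha> :: "nat \<Rightarrow> real"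
  assumes am: "\<forall>t. \<alpha> (t+1) \<le> \<alpha> t" and st: "s \<le> t"
  shows "\<alpha> t \<le> \<alpha> s"
  using st
proof (induction t rule: dec_induct)
  case base then show ?case by simp
next
  case (step m)
  have "\<alpha> (Suc m) \<le> \<alpha> m" using am by (metis Suc_eq_plus1)
  then show ?case using step.IH by linarith
qed

lemma drift_block:
  fixes x a dd :: "nat \<Rightarrow> nat \<Rightarrow> real" and \<alpha> :: "nat \<Rightarrow> real"
  assumes finN: "finite N" and cN: "card N \<le> n"
    and step: "\<forall>t\<ge>1. \<forall>i\<in>N. x i t = a i t - \<alpha> (t-1) * dd i t \<and> stepok N bg n (\<lambda>j. x j (t-1)) (a i t) i"
    and ddpos: "\<forall>t>t0. \<forall>i\<in>N. dd i t \<ge> 0" and ddS: "\<forall>t>t0. \<forall>i\<in>S0. dd i t \<ge> \<delta>" and dpos: "\<delta> > 0"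
    and apos: "\<forall>t. \<alpha> t \<ge> 0" and amono: "\<forall>t. \<alpha> (t+1) \<le> \<alpha> t"
    and G: "\<forall>Lc. S0 \<subseteq> Lc \<and> Lc \<subseteq> N \<and> Lc \<noteq> N \<longrightarrow> (\<exists>i\<in>N - Lc. bg Lc i)" and S0N: "S0 \<subseteq> N"
    and init: "\<forall>i\<in>N. x i t0 \<le> B"
  shows "\<forall>i\<in>N. x i (t0 + Suc n) \<le> B - \<delta> * \<alpha> (t0 + Suc n) / (real n + 1)^n"
proof -
  define eta where "eta u = \<delta> * \<alpha> (t0 + Suc n) / (real n + 1)^u" for u
  define Lc where "Lc u = {i\<in>N. x i (t0 + Suc u) \<le> B - eta u}" for u
  have etan: "eta u \<ge> 0" for u unfolding eta_def using dpos apos by simp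
  have etaS: "eta (Suc u) = eta u / (real n + 1)" for u unfolding eta_def by (simp add: field_simps)
  have eta_le: "eta u \<le> \<delta> * \<alpha> (t0 + Suc n)" for u
  proof -
    have p1: "(real n + 1)^u \<ge> 1" by (rule one_le_power) simp
    have "\<delta> * \<alpha> (t0 + Suc n) / (real n + 1)^u \<le> \<delta> * \<alpha> (t0 + Suc n) / 1"
      by (rule divide_left_mono) (use p1 dpos apos in auto)
    then show ?thesis unfolding eta_def by simp
  qed
  have LcN: "Lc u \<subseteq> N" for u unfolding Lc_def by blast
  have st: "x i (Suc t) = a i (Suc t) - \<alpha> t * dd i (Suc t)" "stepok N bg n (\<lambda>j. x j t) (a i (Suc t)) i"
    if "i \<in> N" for i t
  proof -
    have "x i (Suc t) = a i (Suc t) - \<alpha> (Suc t - 1) * dd i (Suc t) \<and> stepok N bg n (\<lambda>j. x j (Suc t - 1)) (a i (Suc t)) i"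
      by (rule step[rule_format, of "Suc t" i, OF _ that]) simp
    then show "x i (Suc t) = a i (Suc t) - \<alpha> t * dd i (Suc t)" "stepok N bg n (\<lambda>j. x j t) (a i (Suc t)) i" by auto
  qed
  have down: "x i (Suc t) \<le> a i (Suc t)" if "i \<in> N" "t \<ge> t0" for i t
  proof -
    have "dd i (Suc t) \<ge> 0" using ddpos that by auto
    then have "\<alpha> t * dd i (Suc t) \<ge> 0" using apos by simp
    then show ?thesis using st(1)[of i t, OF that(1)] by linarith
  qed
  have downS: "x i (Suc t) \<le> a i (Suc t) - \<delta> * \<alpha> (t0 + Suc n)" if "i \<in> S0" "t \<ge> t0" "t \<le> t0 + n" for i t
  proof -
    have iN: "i \<in> N" using that S0N by blast
    have "dd i (Suc t) \<ge> \<delta>" using ddS that by auto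
    then have "\<alpha> t * dd i (Suc t) \<ge> \<alpha> t * \<delta>" using apos by (simp add: mult_left_mono)
    moreover have "\<alpha> (t0 + Suc n) \<le> \<alpha> t" by (rule alpha_anti[OF amono]) (use that in simp)
    then have "\<alpha> t * \<delta> \<ge> \<alpha> (t0 + Suc n) * \<delta>" using dpos by (simp add: mult_right_mono)
    ultimately show ?thesis using st(1)[of i t, OF iN] by (simp add: mult.commute)
  qed
  have inv: "u \<le> n \<Longrightarrow> (\<forall>i\<in>N. x i (t0 + Suc u) \<le> B) \<and> S0 \<subseteq> Lc u \<and> (Lc u = N \<or> u \<le> card (Lc u))" for u
  proof (induction u)
    case 0
    have b: "x i (t0 + Suc 0) \<le> B" if "i \<in> N" for i
    proof -
      have "a i (Suc t0) \<le> B" by (rule stepok_up[OF st(2)[OF that] init])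
      then show ?thesis using down[OF that, of t0] by simp
    qed
    have s: "S0 \<subseteq> Lc 0"
    proof
      fix i assume i: "i \<in> S0"
      then have iN: "i \<in> N" using S0N by blast
      have "a i (Suc t0) \<le> B" by (rule stepok_up[OF st(2)[OF iN] init])
      then have "x i (Suc t0) \<le> B - \<delta> * \<alpha> (t0 + Suc n)" using downS[OF i, of t0] by simp
      then show "i \<in> Lc 0" using eta_le[of 0] iN unfolding Lc_def by simp
    qed
    show ?case using b s by simp
  next
    case (Suc u)
    then have un: "u \<le> n" by simp
    have IHb: "\<forall>i\<in>N. x i (t0 + Suc u) \<le> B" and IHs: "S0 \<subseteq> Lc u"
      and IHc: "Lc u = N \<or> u \<le> card (Lc u)" using Suc.IH un by blast+
    define t where "t = t0 + Suc u"
    have tt: "t \<ge> t0" "t \<le> t0 + n" using Suc.prems unfolding t_def by auto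
    have IHb': "\<forall>j\<in>N. x j t \<le> B" using IHb unfolding t_def by simp
    have b: "x i (Suc t) \<le> B" if "i \<in> N" for i
    proof -
      have "a i (Suc t) \<le> B" by (rule stepok_up[OF st(2)[OF that] IHb'])
      then show ?thesis using down[OF that tt(1)] by simp
    qed
    have grow: "x i (Suc t) \<le> B - eta (Suc u)" if i: "i \<in> N" and h: "i \<in> Lc u \<or> bg (Lc u) i" for i
    proof -
      have ls: "\<forall>j\<in>Lc u. x j t \<le> B - eta u" unfolding Lc_def t_def by blast
      have "a i (Suc t) \<le> B - (B - (B - eta u)) / (real n + 1)"
        by (rule stepok_grow[OF st(2)[OF i] LcN ls h IHb']) (use etan[of u] in simp)
      then have "a i (Suc t) \<le> B - eta (Suc u)" using etaS[of u] by simp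
      then show ?thesis using down[OF i tt(1)] by simp
    qed
    have sub: "Lc u \<subseteq> Lc (Suc u)"
    proof
      fix i assume i: "i \<in> Lc u"
      then have iN: "i \<in> N" using LcN by blast
      have "x i (Suc t) \<le> B - eta (Suc u)" using grow[OF iN] i by blast
      then show "i \<in> Lc (Suc u)" using iN unfolding Lc_def t_def by simp
    qed
    have s: "S0 \<subseteq> Lc (Suc u)"
    proof
      fix i assume i: "i \<in> S0"
      then have iN: "i \<in> N" using S0N by blast
      have "a i (Suc t) \<le> B" by (rule stepok_up[OF st(2)[OF iN] IHb'])
      then have "x i (Suc t) \<le> B - \<delta> * \<alpha> (t0 + Suc n)" using downS[OF i tt] by simp
      then have "x i (Suc t) \<le> B - eta (Suc u)" using eta_le[of "Suc u"] by simp
      then show "i \<in> Lc (Suc u)" using iN unfolding Lc_def t_def by simp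
    qed
    have bb: "\<forall>i\<in>N. x i (t0 + Suc (Suc u)) \<le> B" using b unfolding t_def by simp
    have cc: "Lc (Suc u) = N \<or> Suc u \<le> card (Lc (Suc u))"
    proof (cases "Lc (Suc u) = N")
      case True then show ?thesis by blast
    next
      case False
      have nL: "Lc u \<noteq> N"
      proof
        assume "Lc u = N"
        then have "N \<subseteq> Lc (Suc u)" using sub by simp
        then have "Lc (Suc u) = N" by (rule subset_antisym[OF LcN])
        then show False using False by simp
      qed
      have c0: "u \<le> card (Lc u)" using IHc nL by blast
      obtain i where i: "i \<in> N" "i \<notin> Lc u" "bg (Lc u) i"
        using G[rule_format, of "Lc u"] IHs LcN[of u] nL by blast
      have "x i (Suc t) \<le> B - eta (Suc u)" using grow[OF i(1)] i(3) by blast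
      then have "i \<in> Lc (Suc u)" using i(1) unfolding Lc_def t_def by simp
      then have "Lc u \<noteq> Lc (Suc u)" using i(2) by blast
      then have ps: "Lc u \<subset> Lc (Suc u)" by (rule psubsetI[OF sub])
      have fL: "finite (Lc (Suc u))" by (rule finite_subset[OF LcN finN])
      have "card (Lc u) < card (Lc (Suc u))" by (rule psubset_card_mono[OF fL ps])
      then show ?thesis using c0 by linarith
    qed
    show ?case using bb s cc by blast
  qed
  have fin: "Lc n = N \<or> n \<le> card (Lc n)" using inv by blast
  have "Lc n = N"
  proof (cases "Lc n = N")
    case True then show ?thesis .
  next
    case False
    then have "n \<le> card (Lc n)" using fin by blast
    moreover have "card (Lc n) \<le> card N" by (rule card_mono[OF finN LcN])
    ultimately have "card (Lc n) = card N" using cN by linarith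
    then show ?thesis by (rule card_subset_eq[OF finN LcN])
  qed
  then have "\<forall>i\<in>N. x i (t0 + Suc n) \<le> B - eta n" unfolding Lc_def by blast
  then show ?thesis unfolding eta_def by simp
qed

lemma sum_split_at:
  fixes g :: "nat \<Rightarrow> real"
  shows "(\<Sum>t<m + k. g t) = (\<Sum>t<m. g t) + (\<Sum>t\<in>{m..<m+k}. g t)"
proof (induction k)
  case 0 then show ?case by simp
next
  case (Suc k)
  have "{m..<m + Suc k} = insert (m + k) {m..<m+k}" by auto
  then have "(\<Sum>t\<in>{m..<m + Suc k}. g t) = g (m + k) + (\<Sum>t\<in>{m..<m+k}. g t)" by simp
  moreover have "(\<Sum>t<m + Suc k. g t) = (\<Sum>t<m + k. g t) + g (m + k)" by simp
  ultimately show ?case using Suc.IH by simp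
qed

lemma block_sum:
  fixes \<alpha> :: "nat \<Rightarrow> real"
  assumes apos: "\<forall>t. \<alpha> t \<ge> 0" and amono: "\<forall>t. \<alpha> (t+1) \<le> \<alpha> t"
  shows "(\<Sum>t<t0 + Suc b * T. \<alpha> t) \<le> (\<Sum>t<t0 + T. \<alpha> t) + real T * (\<Sum>b'<b. \<alpha> (t0 + Suc b' * T))"
proof (induction b)
  case 0 then show ?case by simp
next
  case (Suc b)
  define m where "m = t0 + Suc b * T"
  have eqm: "t0 + Suc (Suc b) * T = m + T" unfolding m_def by simp
  have blk: "(\<Sum>t\<in>{m..<m+T}. \<alpha> t) \<le> real T * \<alpha> m"
  proof -
    have h: "\<alpha> t \<le> \<alpha> m" if "t \<in> {m..<m+T}" for t
      using alpha_anti[OF amono, of m t] that by simp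
    have "(\<Sum>t\<in>{m..<m+T}. \<alpha> t) \<le> of_nat (card {m..<m+T}) * \<alpha> m" by (rule sum_bounded_above[OF h])
    then show ?thesis by simp
  qed
  have "(\<Sum>t<t0 + Suc (Suc b) * T. \<alpha> t) = (\<Sum>t<m. \<alpha> t) + (\<Sum>t\<in>{m..<m+T}. \<alpha> t)"
    unfolding eqm by (rule sum_split_at)
  also have "\<dots> \<le> (\<Sum>t<t0 + T. \<alpha> t) + real T * (\<Sum>b'<b. \<alpha> (t0 + Suc b' * T)) + real T * \<alpha> m"
    using Suc.IH blk unfolding m_def by linarith
  also have "\<dots> = (\<Sum>t<t0 + T. \<alpha> t) + real T * (\<Sum>b'<Suc b. \<alpha> (t0 + Suc b' * T))"
    unfolding m_def by (simp add: algebra_simps)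
  finally show ?case .
qed

lemma drift_contra:
  fixes x a dd :: "nat \<Rightarrow> nat \<Rightarrow> real" and \<alpha> :: "nat \<Rightarrow> real"
  assumes finN: "finite N" and cN: "card N \<le> n"
    and step: "\<forall>t\<ge>1. \<forall>i\<in>N. x i t = a i t - \<alpha> (t-1) * dd i t \<and> stepok N bg n (\<lambda>j. x j (t-1)) (a i t) i"
    and ddpos: "\<forall>t>t0. \<forall>i\<in>N. dd i t \<ge> 0" and ddS: "\<forall>t>t0. \<forall>i\<in>S0. dd i t \<ge> \<delta>" and dpos: "\<delta> > 0"
    and apos: "\<forall>t. \<alpha> t \<ge> 0" and amono: "\<forall>t. \<alpha> (t+1) \<le> \<alpha> t"
    and G: "\<forall>Lc. S0 \<subseteq> Lc \<and> Lc \<subseteq> N \<and> Lc \<noteq> N \<longrightarrow> (\<exists>i\<in>N - Lc. bg Lc i)" and S0N: "S0 \<subseteq> N"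
    and lev: "\<forall>t\<ge>t0. \<forall>i\<in>N. lev \<le> x i t" and Nne: "N \<noteq> {}"
    and div: "filterlim (\<lambda>M. \<Sum>t<M. \<alpha> t) at_top sequentially"
  shows False
proof -
  define T where "T = Suc n"
  define c where "c = \<delta> / (real n + 1)^n"
  have cpos: "c > 0" unfolding c_def using dpos by simp
  define B0 where "B0 = (\<Sum>i\<in>N. \<bar>x i t0\<bar>)"
  have init: "\<forall>i\<in>N. x i t0 \<le> B0"
  proof
    fix i assume i: "i \<in> N"
    have "\<bar>x i t0\<bar> \<le> B0" unfolding B0_def by (rule member_le_sum[OF i _ finN]) simp
    then show "x i t0 \<le> B0" by simp
  qed
  have iter: "\<forall>i\<in>N. x i (t0 + b * T) \<le> B0 - c * (\<Sum>b'<b. \<alpha> (t0 + Suc b' * T))" for b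
  proof (induction b)
    case 0 show ?case using init by simp
  next
    case (Suc b)
    define t1 where "t1 = t0 + b * T"
    have dp: "\<forall>t>t1. \<forall>i\<in>N. dd i t \<ge> 0" using ddpos unfolding t1_def by auto
    have dS: "\<forall>t>t1. \<forall>i\<in>S0. dd i t \<ge> \<delta>" using ddS unfolding t1_def by auto
    have IH: "\<forall>i\<in>N. x i t1 \<le> B0 - c * (\<Sum>b'<b. \<alpha> (t0 + Suc b' * T))" using Suc.IH unfolding t1_def .
    have r: "\<forall>i\<in>N. x i (t1 + Suc n) \<le> (B0 - c * (\<Sum>b'<b. \<alpha> (t0 + Suc b' * T))) - \<delta> * \<alpha> (t1 + Suc n) / (real n + 1)^n"
      by (rule drift_block[OF finN cN step dp dS dpos apos amono G S0N IH])
    have e1: "t1 + Suc n = t0 + Suc b * T" unfolding t1_def T_def by simp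
    have e2: "\<delta> * \<alpha> (t0 + Suc b * T) / (real n + 1)^n = c * \<alpha> (t0 + Suc b * T)" unfolding c_def by simp
    show ?case
    proof
      fix i assume i: "i \<in> N"
      have "x i (t0 + Suc b * T) \<le> (B0 - c * (\<Sum>b'<b. \<alpha> (t0 + Suc b' * T))) - c * \<alpha> (t0 + Suc b * T)"
        using r i unfolding e1 e2 by blast
      then show "x i (t0 + Suc b * T) \<le> B0 - c * (\<Sum>b'<Suc b. \<alpha> (t0 + Suc b' * T))"
        by (simp add: algebra_simps)
    qed
  qed
  obtain i0 where i0: "i0 \<in> N" using Nne by blast
  have bnd: "(\<Sum>b'<b. \<alpha> (t0 + Suc b' * T)) \<le> (B0 - lev) / c" for b
  proof -
    have "lev \<le> x i0 (t0 + b * T)" using lev i0 by simp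
    then have "c * (\<Sum>b'<b. \<alpha> (t0 + Suc b' * T)) \<le> B0 - lev" using iter[of b] i0 by fastforce
    then show ?thesis using cpos by (simp add: pos_le_divide_eq mult.commute)
  qed
  define K where "K = (\<Sum>t<t0 + T. \<alpha> t) + real T * ((B0 - lev) / c)"
  have bsum: "(\<Sum>t<M. \<alpha> t) \<le> K" for M
  proof -
    have "M \<le> t0 + Suc M * T" unfolding T_def by simp
    then have "(\<Sum>t<M. \<alpha> t) \<le> (\<Sum>t<t0 + Suc M * T. \<alpha> t)"
      by (intro sum_mono2) (use apos in auto)
    also have "\<dots> \<le> (\<Sum>t<t0 + T. \<alpha> t) + real T * (\<Sum>b'<M. \<alpha> (t0 + Suc b' * T))"
      by (rule block_sum[OF apos amono])
    also have "\<dots> \<le> K"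
    proof -
      have "real T * (\<Sum>b'<M. \<alpha> (t0 + Suc b' * T)) \<le> real T * ((B0 - lev) / c)"
        by (rule mult_left_mono[OF bnd]) simp
      then show ?thesis unfolding K_def by linarith
    qed
    finally show ?thesis .
  qed
  have "\<forall>\<^sub>F M in sequentially. K + 1 \<le> (\<Sum>t<M. \<alpha> t)" using div unfolding filterlim_at_top by blast
  then obtain M where "K + 1 \<le> (\<Sum>t<M. \<alpha> t)" unfolding eventually_sequentially by blast
  then show False using bsum[of M] by linarith
qed

lemma sum_shift_T:
  fixes u :: "nat \<Rightarrow> real"
  shows "(\<Sum>s<M + T. u s) = (\<Sum>s<T. u s) + (\<Sum>s<M. u (s + T))"
proof (induction M)
  case 0 then show ?case by simp
next
  case (Suc M)
  have "(\<Sum>s<Suc M + T. u s) = (\<Sum>s<M + T. u s) + u (M + T)" by simp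
  then show ?case using Suc.IH by simp
qed

lemma summable_rec:
  fixes u e :: "nat \<Rightarrow> real"
  assumes upos: "\<forall>s. 0 \<le> u s" and epos: "\<forall>s. 0 \<le> e s" and se: "summable e"
    and l0: "0 \<le> l" and l1: "l < 1" and rec: "\<forall>s. u (s + T) \<le> l * u s + e s"
  shows "summable u"
proof -
  define Q where "Q M = (\<Sum>s<M. u s)" for M
  have Qmono: "Q M \<le> Q (M + T)" for M unfolding Q_def by (intro sum_mono2) (use upos in auto)
  have Qb: "Q (M + T) \<le> (Q T + suminf e) / (1 - l)" for M
  proof -
    have "Q (M + T) = Q T + (\<Sum>s<M. u (s + T))" unfolding Q_def by (rule sum_shift_T)
    also have "(\<Sum>s<M. u (s + T)) \<le> (\<Sum>s<M. l * u s + e s)" using rec by (intro sum_mono) auto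
    also have "\<dots> = l * Q M + (\<Sum>s<M. e s)" unfolding Q_def by (simp add: sum.distrib sum_distrib_left)
    also have "(\<Sum>s<M. e s) \<le> suminf e" by (rule sum_le_suminf[OF se]) (use epos in auto)
    finally have "Q (M + T) \<le> Q T + l * Q M + suminf e" by simp
    moreover have "l * Q M \<le> l * Q (M + T)" using Qmono l0 by (simp add: mult_left_mono)
    ultimately have "(1 - l) * Q (M + T) \<le> Q T + suminf e" by (simp add: algebra_simps)
    then show ?thesis using l1 by (simp add: pos_le_divide_eq mult.commute)
  qed
  show ?thesis
  proof (rule summableI_nonneg_bounded)
    show "0 \<le> u s" for s using upos by simp
    show "sum u {..<M} \<le> (Q T + suminf e) / (1 - l)" for M
      using Qmono[of M] Qb[of M] unfolding Q_def by linarith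
  qed
qed

lemma tendsto_rec:
  fixes r e :: "nat \<Rightarrow> real"
  assumes rpos: "\<forall>s. 0 \<le> r s" and l0: "0 \<le> l" and l1: "l < 1" and rec: "\<forall>s. r (s + T) \<le> l * r s + e s"
    and e0: "e \<longlonglongrightarrow> 0" and T1: "T \<ge> 1"
  shows "r \<longlonglongrightarrow> 0"
proof (rule LIMSEQ_I)
  fix \<epsilon> :: real assume \<epsilon>: "0 < \<epsilon>"
  have "0 < (1 - l) * \<epsilon> / 2" using l1 \<epsilon> by simp
  then obtain S where S: "\<forall>s\<ge>S. norm (e s - 0) < (1 - l) * \<epsilon> / 2" using LIMSEQ_D[OF e0] by blast
  define D where "D = (\<Sum>\<rho><T. r (S + \<rho>))"
  have Dpos: "D \<ge> 0" unfolding D_def using rpos by (simp add: sum_nonneg)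
  have claim: "\<forall>\<rho><T. r (S + j*T + \<rho>) \<le> \<epsilon>/2 + l^j * D" for j
  proof (induction j)
    case 0
    show ?case
    proof (intro allI impI)
      fix \<rho> assume "\<rho> < T"
      then have "r (S + \<rho>) \<le> D" unfolding D_def by (intro member_le_sum) (use rpos in auto)
      then show "r (S + 0*T + \<rho>) \<le> \<epsilon>/2 + l^0 * D" using \<epsilon> by simp
    qed
  next
    case (Suc j)
    show ?case
    proof (intro allI impI)
      fix \<rho> assume \<rho>: "\<rho> < T"
      define s where "s = S + j*T + \<rho>"
      have eq: "S + Suc j * T + \<rho> = s + T" unfolding s_def by simp
      have rs: "r s \<le> \<epsilon>/2 + l^j * D" using Suc.IH \<rho> unfolding s_def by blast
      have Ss: "S \<le> s" unfolding s_def by simp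
      have "norm (e s - 0) < (1 - l) * \<epsilon> / 2" using S Ss by blast
      then have es: "e s < (1 - l) * \<epsilon> / 2" by simp
      have "r (s + T) \<le> l * r s + e s" using rec by blast
      also have "l * r s \<le> l * (\<epsilon>/2 + l^j * D)" using rs l0 by (simp add: mult_left_mono)
      finally have "r (s + T) \<le> l * (\<epsilon>/2 + l^j * D) + (1 - l) * \<epsilon> / 2" using es by linarith
      also have "\<dots> = \<epsilon>/2 + l^Suc j * D" by (simp add: field_simps)
      finally show "r (S + Suc j * T + \<rho>) \<le> \<epsilon>/2 + l^Suc j * D" unfolding eq .
    qed
  qed
  have "(\<lambda>j. l^j) \<longlonglongrightarrow> 0" by (rule LIMSEQ_power_zero) (use l0 l1 in simp)
  then have "(\<lambda>j. l^j * D) \<longlonglongrightarrow> 0 * D" by (intro tendsto_mult tendsto_const)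
  then have "(\<lambda>j. l^j * D) \<longlonglongrightarrow> 0" by simp
  moreover have e2: "\<epsilon>/2 > 0" using \<epsilon> by simp
  ultimately obtain J where J: "\<forall>j\<ge>J. norm (l^j * D - 0) < \<epsilon>/2" using LIMSEQ_D by blast
  show "\<exists>no. \<forall>m\<ge>no. norm (r m - 0) < \<epsilon>"
  proof (intro exI allI impI)
    fix m assume m: "S + J*T \<le> m"
    define j where "j = (m - S) div T"
    define \<rho> where "\<rho> = (m - S) mod T"
    have mS: "m = S + j*T + \<rho>" unfolding j_def \<rho>_def using m by simp
    have \<rho>T: "\<rho> < T" unfolding \<rho>_def using T1 by simp
    have "J * T \<le> m - S" using m by simp
    then have "J * T div T \<le> (m - S) div T" by (rule div_le_mono)
    then have jJ: "J \<le> j" unfolding j_def using T1 by simp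
    have "r m \<le> \<epsilon>/2 + l^j * D" using claim[of j] \<rho>T mS by metis
    moreover have "l^j * D < \<epsilon>/2"
    proof -
      have "norm (l^j * D - 0) < \<epsilon>/2" using J jJ by blast
      then have "\<bar>l^j * D\<bar> < \<epsilon>/2" by simp
      then show ?thesis using abs_ge_self[of "l^j * D"] by linarith
    qed
    ultimately show "norm (r m - 0) < \<epsilon>" using rpos by simp
  qed
qed

lemma conv_rec:
  fixes V e :: "nat \<Rightarrow> real"
  assumes Vpos: "\<forall>t. 0 \<le> V t" and rec: "\<forall>t. V (Suc t) \<le> V t + e t" and epos: "\<forall>t. 0 \<le> e t"
    and se: "summable e"
  shows "convergent V"
proof -
  define W where "W t = V t - (\<Sum>s<t. e s)" for t
  have dec: "decseq W"
  proof (rule decseq_SucI)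
    fix t show "W (Suc t) \<le> W t" unfolding W_def using rec[rule_format, of t] by simp
  qed
  have lb: "\<forall>t. - suminf e \<le> W t"
  proof
    fix t
    have "(\<Sum>s<t. e s) \<le> suminf e" by (rule sum_le_suminf[OF se]) (use epos in auto)
    then show "- suminf e \<le> W t" unfolding W_def using Vpos by smt
  qed
  obtain LW where LW: "W \<longlonglongrightarrow> LW" using decseq_convergent[OF dec lb] by blast
  have "(\<lambda>t. W t + (\<Sum>s<t. e s)) \<longlonglongrightarrow> LW + suminf e"
    by (intro tendsto_add LW summable_LIMSEQ[OF se])
  moreover have "(\<lambda>t. W t + (\<Sum>s<t. e s)) = V" unfolding W_def by auto
  ultimately show ?thesis unfolding convergent_def by auto
qed

lemma sign_eventually:
  fixes y :: "nat \<Rightarrow> real"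
  assumes lim: "(\<lambda>t. \<bar>y t - q\<bar>) \<longlonglongrightarrow> l" and lpos: "l > 0" and st: "(\<lambda>t. y (Suc t) - y t) \<longlonglongrightarrow> 0"
  shows "(\<exists>t1. \<forall>t\<ge>t1. y t > q + l/2) \<or> (\<exists>t1. \<forall>t\<ge>t1. y t < q - l/2)"
proof -
  have l2: "l/2 > 0" using lpos by simp
  obtain t1 where t1: "\<forall>t\<ge>t1. norm (\<bar>y t - q\<bar> - l) < l/2" using LIMSEQ_D[OF lim l2] by blast
  obtain t2 where t2: "\<forall>t\<ge>t2. norm (y (Suc t) - y t - 0) < l" using LIMSEQ_D[OF st lpos] by blast
  define t3 where "t3 = max t1 t2"
  have side: "y t > q + l/2 \<or> y t < q - l/2" if "t \<ge> t3" for t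
  proof -
    have "t \<ge> t1" using that unfolding t3_def by simp
    then have "norm (\<bar>y t - q\<bar> - l) < l/2" using t1 by blast
    then have h: "\<bar>\<bar>y t - q\<bar> - l\<bar> < l/2" by simp
    have h2: "l/2 < \<bar>y t - q\<bar>" using h unfolding abs_less_iff by linarith
    show ?thesis
    proof (cases "y t \<ge> q")
      case True then have "\<bar>y t - q\<bar> = y t - q" by simp
      then show ?thesis using h2 by linarith
    next
      case False then have "\<bar>y t - q\<bar> = q - y t" by simp
      then show ?thesis using h2 by linarith
    qed
  qed
  have jump: "\<bar>y (Suc t) - y t\<bar> < l" if "t \<ge> t3" for t
  proof -
    have "t \<ge> t2" using that unfolding t3_def by simp
    then have "norm (y (Suc t) - y t - 0) < l" using t2 by blast
    then show ?thesis by simp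
  qed
  show ?thesis
  proof (cases "y t3 > q + l/2")
    case True
    have "\<forall>t\<ge>t3. y t > q + l/2"
    proof (intro allI impI)
      fix t assume "t \<ge> t3"
      then show "y t > q + l/2"
      proof (induction t rule: dec_induct)
        case base then show ?case using True .
      next
        case (step m)
        have m3: "t3 \<le> Suc m" "t3 \<le> m" using step.hyps by auto
        have dj: "y (Suc m) > q + l/2 \<or> y (Suc m) < q - l/2" by (rule side[OF m3(1)])
        have "\<bar>y (Suc m) - y m\<bar> < l" by (rule jump[OF m3(2)])
        then have j1: "y m - l < y (Suc m)" "y (Suc m) < y m + l" unfolding abs_less_iff by linarith+
        from dj show ?case
        proof
          assume "y (Suc m) > q + l/2" then show ?case using step.IH j1 by linarith
        next
          assume "y (Suc m) < q - l/2" then show ?case using step.IH j1 by linarith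
        qed
      qed
    qed
    then show ?thesis by (intro disjI1 exI)
  next
    case False
    then have F: "y t3 < q - l/2" using side[of t3] by simp
    have "\<forall>t\<ge>t3. y t < q - l/2"
    proof (intro allI impI)
      fix t assume "t \<ge> t3"
      then show "y t < q - l/2"
      proof (induction t rule: dec_induct)
        case base then show ?case using F .
      next
        case (step m)
        have m3: "t3 \<le> Suc m" "t3 \<le> m" using step.hyps by auto
        have dj: "y (Suc m) > q + l/2 \<or> y (Suc m) < q - l/2" by (rule side[OF m3(1)])
        have "\<bar>y (Suc m) - y m\<bar> < l" by (rule jump[OF m3(2)])
        then have j1: "y m - l < y (Suc m)" "y (Suc m) < y m + l" unfolding abs_less_iff by linarith+
        from dj show ?case
        proof
          assume "y (Suc m) > q + l/2" then show ?case using step.IH j1 by linarith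
        next
          assume "y (Suc m) < q - l/2" then show ?case using step.IH j1 by linarith
        qed
      qed
    qed
    then show ?thesis by (intro disjI2 exI)
  qed
qed

lemma g_lip:
  fixes h :: "nat \<Rightarrow> real \<Rightarrow> real"
  assumes adm: "\<forall>j\<in>{1..k}. admissible L (h j)" and Ap: "\<forall>j\<in>{1..k}. A j i \<ge> 0"
    and As: "(\<Sum>j=1..k. A j i) = 1"
  shows "\<bar>(\<Sum>j=1..k. A j i * h j u) - (\<Sum>j=1..k. A j i * h j v)\<bar> \<le> L * \<bar>u - v\<bar>"
proof -
  have hl: "\<bar>h j u - h j v\<bar> \<le> L * \<bar>u - v\<bar>" if j: "j \<in> {1..k}" for j
  proof -
    have "L-lipschitz_on UNIV (h j)" using adm j unfolding admissible_def by blast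
    then have "dist (h j u) (h j v) \<le> L * dist u v" by (rule lipschitz_onD) auto
    then show ?thesis by (simp add: dist_real_def)
  qed
  have "(\<Sum>j=1..k. A j i * h j u) - (\<Sum>j=1..k. A j i * h j v) = (\<Sum>j=1..k. A j i * (h j u - h j v))"
    by (simp add: sum_subtractf right_diff_distrib)
  then have "\<bar>(\<Sum>j=1..k. A j i * h j u) - (\<Sum>j=1..k. A j i * h j v)\<bar> \<le> (\<Sum>j=1..k. \<bar>A j i * (h j u - h j v)\<bar>)"
    by (simp add: sum_abs)
  also have "\<dots> \<le> (\<Sum>j=1..k. A j i * (L * \<bar>u - v\<bar>))"
  proof (rule sum_mono)
    fix j assume j: "j \<in> {1..k}"
    have "\<bar>A j i * (h j u - h j v)\<bar> = A j i * \<bar>h j u - h j v\<bar>" using Ap j by (simp add: abs_mult)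
    also have "\<dots> \<le> A j i * (L * \<bar>u - v\<bar>)" using hl[OF j] Ap j by (simp add: mult_left_mono)
    finally show "\<bar>A j i * (h j u - h j v)\<bar> \<le> A j i * (L * \<bar>u - v\<bar>)" .
  qed
  also have "\<dots> = (\<Sum>j=1..k. A j i) * (L * \<bar>u - v\<bar>)" by (simp add: sum_distrib_right)
  finally show ?thesis using As by simp
qed

lemma subgrad_bound:
  fixes g :: "real \<Rightarrow> real"
  assumes sg: "subgradient g xv d" and lip: "\<forall>u v. \<bar>g u - g v\<bar> \<le> L * \<bar>u - v\<bar>"
  shows "\<bar>d\<bar> \<le> L"
proof -
  have a1: "g (xv + 1) \<ge> g xv + d * ((xv + 1) - xv)" using sg unfolding subgradient_def by blast
  have a2: "g (xv - 1) \<ge> g xv + d * ((xv - 1) - xv)" using sg unfolding subgradient_def by blast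
  have b1: "\<bar>g (xv + 1) - g xv\<bar> \<le> L * \<bar>(xv + 1) - xv\<bar>" using lip by blast
  have b2: "\<bar>g (xv - 1) - g xv\<bar> \<le> L * \<bar>(xv - 1) - xv\<bar>" using lip by blast
  have "d \<le> L" using a1 b1 by (simp add: abs_le_iff)
  moreover have "- d \<le> L" using a2 b2 by (simp add: abs_le_iff)
  ultimately show ?thesis by (simp add: abs_le_iff)
qed

lemma g_min:
  fixes h :: "nat \<Rightarrow> real \<Rightarrow> real"
  assumes z: "\<forall>j\<in>{1..k}. z \<in> argmin_set (h j)" and Ap: "\<forall>j\<in>{1..k}. A j i \<ge> 0"
  shows "(\<Sum>j=1..k. A j i * h j z) \<le> (\<Sum>j=1..k. A j i * h j y)"
proof (rule sum_mono)
  fix j assume j: "j \<in> {1..k}"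
  have "h j z \<le> h j y" using z j unfolding argmin_set_def by blast
  then show "A j i * h j z \<le> A j i * h j y" using Ap j by (simp add: mult_left_mono)
qed

lemma subgrad_sign:
  fixes g :: "real \<Rightarrow> real"
  assumes sg: "subgradient g xv d" and gz: "g z \<le> g xv"
  shows "d * (xv - z) \<ge> 0"
proof -
  have "g z \<ge> g xv + d * (z - xv)" using sg unfolding subgradient_def by blast
  then show ?thesis using gz by (simp add: algebra_simps)
qed

lemma convex_slope_up:
  fixes hh :: "real \<Rightarrow> real"
  assumes cv: "convex_on UNIV hh" and qc: "q < c" and cx: "c \<le> xv"
  shows "(hh c - hh q) * (xv - q) \<le> (hh xv - hh q) * (c - q)"
proof -
  define t where "t = (c - q) / (xv - q)"
  have xq: "xv - q > 0" using qc cx by simp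
  have t0: "0 \<le> t" and t1: "t \<le> 1" unfolding t_def using qc cx xq by (auto simp: divide_le_eq)
  have tt: "t * (xv - q) = c - q" unfolding t_def using xq by simp
  have "(1 - t) * q + t * xv = q + t * (xv - q)" by (simp add: algebra_simps)
  then have ceq: "(1 - t) *\<^sub>R q + t *\<^sub>R xv = c" using tt by simp
  have "hh ((1 - t) *\<^sub>R q + t *\<^sub>R xv) \<le> (1 - t) * hh q + t * hh xv"
    by (rule convex_onD[OF cv t0 t1]) auto
  then have "hh c - hh q \<le> t * (hh xv - hh q)" unfolding ceq by (simp add: algebra_simps)
  then have "(hh c - hh q) * (xv - q) \<le> t * (hh xv - hh q) * (xv - q)" using xq by (simp add: mult_right_mono)
  also have "\<dots> = (hh xv - hh q) * (c - q)" unfolding t_def using xq by (simp add: field_simps)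
  finally show ?thesis .
qed

lemma convex_slope_down:
  fixes hh :: "real \<Rightarrow> real"
  assumes cv: "convex_on UNIV hh" and cp: "c < p" and xc: "xv \<le> c"
  shows "(hh c - hh p) * (p - xv) \<le> (hh xv - hh p) * (p - c)"
proof -
  define t where "t = (p - c) / (p - xv)"
  have px: "p - xv > 0" using cp xc by simp
  have t0: "0 \<le> t" and t1: "t \<le> 1" unfolding t_def using cp xc px by (auto simp: divide_le_eq)
  have tt: "t * (p - xv) = p - c" unfolding t_def using px by simp
  have "(1 - t) * p + t * xv = p - t * (p - xv)" by (simp add: algebra_simps)
  then have ceq: "(1 - t) *\<^sub>R p + t *\<^sub>R xv = c" using tt by simp
  have "hh ((1 - t) *\<^sub>R p + t *\<^sub>R xv) \<le> (1 - t) * hh p + t * hh xv"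
    by (rule convex_onD[OF cv t0 t1]) auto
  then have "hh c - hh p \<le> t * (hh xv - hh p)" unfolding ceq by (simp add: algebra_simps)
  then have "(hh c - hh p) * (p - xv) \<le> t * (hh xv - hh p) * (p - xv)" using px by (simp add: mult_right_mono)
  also have "\<dots> = (hh xv - hh p) * (p - c)" unfolding t_def using px by (simp add: field_simps)
  finally show ?thesis .
qed

lemma sum_ge_single:
  fixes w :: "nat \<Rightarrow> real"
  assumes "j0 \<in> {1..k}" "\<forall>j\<in>{1..k}. w j \<ge> 0"
  shows "w j0 \<le> (\<Sum>j=1..k. w j)"
  by (rule member_le_sum) (use assms in auto)

lemma drift_above_d:
  fixes h :: "nat \<Rightarrow> real \<Rightarrow> real"
  assumes adm: "\<forall>j\<in>{1..k}. admissible L (h j)" and Ap: "\<forall>j\<in>{1..k}. A j i \<ge> 0"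
    and q: "\<forall>j\<in>{1..k}. q \<in> argmin_set (h j)" and qc: "q < c" and j0: "j0 \<in> {1..k}"
    and cx: "c \<le> xv" and sg: "subgradient (\<lambda>y. \<Sum>j=1..k. A j i * h j y) xv d"
  shows "d \<ge> A j0 i * ((h j0 c - h j0 q) / (c - q))"
proof -
  define g where "g y = (\<Sum>j=1..k. A j i * h j y)" for y
  have xq: "xv - q > 0" using qc cx by simp
  have "g q \<ge> g xv + d * (q - xv)" using sg unfolding subgradient_def g_def by blast
  then have d1: "d * (xv - q) \<ge> g xv - g q" by (simp add: algebra_simps)
  have "g xv - g q = (\<Sum>j=1..k. A j i * (h j xv - h j q))"
    unfolding g_def by (simp add: sum_subtractf right_diff_distrib)
  also have "\<dots> \<ge> A j0 i * (h j0 xv - h j0 q)"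
  proof -
    have nn: "\<forall>j\<in>{1..k}. 0 \<le> A j i * (h j xv - h j q)"
    proof
      fix j assume j: "j \<in> {1..k}"
      have "h j q \<le> h j xv" using q j unfolding argmin_set_def by blast
      then show "0 \<le> A j i * (h j xv - h j q)" using Ap j by simp
    qed
    show ?thesis using sum_ge_single[OF j0 nn] by simp
  qed
  finally have d2: "d * (xv - q) \<ge> A j0 i * (h j0 xv - h j0 q)" using d1 by linarith
  have cv: "convex_on UNIV (h j0)" using adm j0 unfolding admissible_def by blast
  have "(h j0 c - h j0 q) * (xv - q) \<le> (h j0 xv - h j0 q) * (c - q)" by (rule convex_slope_up[OF cv qc cx])
  then have "(h j0 c - h j0 q) / (c - q) * (xv - q) \<le> (h j0 xv - h j0 q)" using qc
    by (simp add: field_simps)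
  then have "A j0 i * ((h j0 c - h j0 q) / (c - q) * (xv - q)) \<le> A j0 i * (h j0 xv - h j0 q)"
    using Ap j0 by (intro mult_left_mono) auto
  then have "A j0 i * ((h j0 c - h j0 q) / (c - q)) * (xv - q) \<le> A j0 i * (h j0 xv - h j0 q)"
    by (simp only: mult.assoc)
  then have "A j0 i * ((h j0 c - h j0 q) / (c - q)) * (xv - q) \<le> d * (xv - q)" using d2 by linarith
  then show ?thesis using xq by (simp only: mult_le_cancel_right_pos)
qed

lemma drift_below_d:
  fixes h :: "nat \<Rightarrow> real \<Rightarrow> real"
  assumes adm: "\<forall>j\<in>{1..k}. admissible L (h j)" and Ap: "\<forall>j\<in>{1..k}. A j i \<ge> 0"
    and p: "\<forall>j\<in>{1..k}. p \<in> argmin_set (h j)" and cp: "c < p" and j0: "j0 \<in> {1..k}"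
    and xc: "xv \<le> c" and sg: "subgradient (\<lambda>y. \<Sum>j=1..k. A j i * h j y) xv d"
  shows "- d \<ge> A j0 i * ((h j0 c - h j0 p) / (p - c))"
proof -
  define g where "g y = (\<Sum>j=1..k. A j i * h j y)" for y
  have px: "p - xv > 0" using cp xc by simp
  have "g p \<ge> g xv + d * (p - xv)" using sg unfolding subgradient_def g_def by blast
  then have d1: "(- d) * (p - xv) \<ge> g xv - g p" by (simp add: algebra_simps)
  have "g xv - g p = (\<Sum>j=1..k. A j i * (h j xv - h j p))"
    unfolding g_def by (simp add: sum_subtractf right_diff_distrib)
  also have "\<dots> \<ge> A j0 i * (h j0 xv - h j0 p)"
  proof -
    have nn: "\<forall>j\<in>{1..k}. 0 \<le> A j i * (h j xv - h j p)"
    proof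
      fix j assume j: "j \<in> {1..k}"
      have "h j p \<le> h j xv" using p j unfolding argmin_set_def by blast
      then show "0 \<le> A j i * (h j xv - h j p)" using Ap j by simp
    qed
    show ?thesis using sum_ge_single[OF j0 nn] by simp
  qed
  finally have d2: "(- d) * (p - xv) \<ge> A j0 i * (h j0 xv - h j0 p)" using d1 by linarith
  have cv: "convex_on UNIV (h j0)" using adm j0 unfolding admissible_def by blast
  have "(h j0 c - h j0 p) * (p - xv) \<le> (h j0 xv - h j0 p) * (p - c)" by (rule convex_slope_down[OF cv cp xc])
  then have "(h j0 c - h j0 p) / (p - c) * (p - xv) \<le> (h j0 xv - h j0 p)" using cp
    by (simp add: field_simps)
  then have "A j0 i * ((h j0 c - h j0 p) / (p - c) * (p - xv)) \<le> A j0 i * (h j0 xv - h j0 p)"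
    using Ap j0 by (intro mult_left_mono) auto
  then have "A j0 i * ((h j0 c - h j0 p) / (p - c)) * (p - xv) \<le> A j0 i * (h j0 xv - h j0 p)"
    by (simp only: mult.assoc)
  then have "A j0 i * ((h j0 c - h j0 p) / (p - c)) * (p - xv) \<le> (- d) * (p - xv)" using d2 by linarith
  then show ?thesis using px by (simp only: mult_le_cancel_right_pos)
qed

lemma Max_img_le: "finite N \<Longrightarrow> N \<noteq> {} \<Longrightarrow> \<forall>i\<in>N. (f i :: real) \<le> B \<Longrightarrow> Max (f ` N) \<le> B"
  by (simp add: Max_le_iff)
lemma Min_img_ge: "finite N \<Longrightarrow> N \<noteq> {} \<Longrightarrow> \<forall>i\<in>N. B \<le> (f i :: real) \<Longrightarrow> B \<le> Min (f ` N)"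
  by (simp add: Min_ge_iff)
lemma Max_img_ge: "finite N \<Longrightarrow> i \<in> N \<Longrightarrow> (f i :: real) \<le> Max (f ` N)"
  by (simp add: Max_ge)
lemma Min_img_le: "finite N \<Longrightarrow> i \<in> N \<Longrightarrow> Min (f ` N) \<le> (f i :: real)"
  by (simp add: Min_le)
lemma Max_img_in: "finite N \<Longrightarrow> N \<noteq> {} \<Longrightarrow> \<exists>i\<in>N. Max (f ` N) = (f i :: real)"
proof -
  assume "finite N" "N \<noteq> {}"
  then have "Max (f ` N) \<in> f ` N" by (intro Max_in) auto
  then show ?thesis by blast
qed

lemma cons_rec:
  fixes x a dd :: "nat \<Rightarrow> nat \<Rightarrow> real" and \<alpha> :: "nat \<Rightarrow> real"
  assumes finN: "finite N" and Nne: "N \<noteq> {}" and cN: "card N \<le> n"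
    and step: "\<forall>t\<ge>1. \<forall>i\<in>N. x i t = a i t - \<alpha> (t-1) * dd i t \<and> stepok N bg n (\<lambda>j. x j (t-1)) (a i t) i
                 \<and> stepok N bg n (\<lambda>j. - x j (t-1)) (- a i t) i"
    and ddL: "\<forall>t\<ge>1. \<forall>i\<in>N. \<bar>dd i t\<bar> \<le> L"
    and apos: "\<forall>t. \<alpha> t \<ge> 0" and amono: "\<forall>t. \<alpha> (t+1) \<le> \<alpha> t"
    and G: "\<forall>Lo Hi. Lo \<subseteq> N \<and> Hi \<subseteq> N \<and> Lo \<union> Hi = N \<and> Lo \<noteq> N \<and> Hi \<noteq> N
              \<longrightarrow> (\<exists>i\<in>N - Lo. bg Lo i) \<or> (\<exists>i\<in>N - Hi. bg Hi i)"
    and L0: "L \<ge> 0"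
  shows "Max ((\<lambda>i. x i (s + n)) ` N) - Min ((\<lambda>i. x i (s + n)) ` N)
     \<le> (1 - 1 / (2 * (real n + 1)^n)) * (Max ((\<lambda>i. x i s) ` N) - Min ((\<lambda>i. x i s) ` N)) + 2 * real n * L * \<alpha> s"
proof -
  define hi where "hi = Max ((\<lambda>i. x i s) ` N)"
  define lo where "lo = Min ((\<lambda>i. x i s) ` N)"
  define P where "P = L * (\<Sum>u<n. \<alpha> (s+u))"
  define ep where "ep = (hi - lo)/2/(real n + 1)^n"
  have init: "\<forall>i\<in>N. lo \<le> x i s \<and> x i s \<le> hi"
  proof
    fix i assume i: "i \<in> N"
    show "lo \<le> x i s \<and> x i s \<le> hi"
      using Min_img_le[OF finN i, of "\<lambda>i. x i s"] Max_img_ge[OF finN i, of "\<lambda>i. x i s"] unfolding lo_def hi_def by simp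
  qed
  have lh: "lo \<le> hi" using init Nne by force
  have cb: "(\<forall>i\<in>N. lo - P \<le> x i (s+n) \<and> x i (s+n) \<le> hi + P - ep) \<or>
            (\<forall>i\<in>N. lo - P + ep \<le> x i (s+n) \<and> x i (s+n) \<le> hi + P)"
    using cons_block[OF finN cN step ddL apos G init lh] unfolding P_def ep_def .
  have sb: "(\<Sum>u<n. \<alpha> (s+u)) \<le> real n * \<alpha> s"
  proof -
    have hh: "\<alpha> (s+u) \<le> \<alpha> s" if "u \<in> {..<n}" for u using alpha_anti[OF amono, of s "s+u"] by simp
    have "(\<Sum>u<n. \<alpha> (s+u)) \<le> of_nat (card {..<n}) * \<alpha> s" by (rule sum_bounded_above[OF hh])
    then show ?thesis by simp
  qed
  have Pb: "P \<le> real n * L * \<alpha> s"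
  proof -
    have "P \<le> L * (real n * \<alpha> s)" unfolding P_def by (rule mult_left_mono[OF sb L0])
    then show ?thesis by (simp add: algebra_simps)
  qed
  have key: "Max ((\<lambda>i. x i (s + n)) ` N) - Min ((\<lambda>i. x i (s + n)) ` N) \<le> hi - lo - ep + 2 * P"
    using cb
  proof
    assume c1: "\<forall>i\<in>N. lo - P \<le> x i (s+n) \<and> x i (s+n) \<le> hi + P - ep"
    have "Max ((\<lambda>i. x i (s + n)) ` N) \<le> hi + P - ep" by (rule Max_img_le[OF finN Nne]) (use c1 in blast)
    moreover have "lo - P \<le> Min ((\<lambda>i. x i (s + n)) ` N)" by (rule Min_img_ge[OF finN Nne]) (use c1 in blast)
    ultimately show ?thesis by linarith
  next
    assume c2: "\<forall>i\<in>N. lo - P + ep \<le> x i (s+n) \<and> x i (s+n) \<le> hi + P"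
    have "Max ((\<lambda>i. x i (s + n)) ` N) \<le> hi + P" by (rule Max_img_le[OF finN Nne]) (use c2 in blast)
    moreover have "lo - P + ep \<le> Min ((\<lambda>i. x i (s + n)) ` N)" by (rule Min_img_ge[OF finN Nne]) (use c2 in blast)
    ultimately show ?thesis by linarith
  qed
  have Kpos: "2 * (real n + 1)^n > 0" by simp
  have epeq: "hi - lo - ep = (1 - 1 / (2 * (real n + 1)^n)) * (hi - lo)"
    unfolding ep_def using Kpos by (simp add: field_simps)
  show ?thesis using key epeq Pb unfolding hi_def lo_def by linarith
qed

lemma fejer_step:
  fixes x a dd :: "nat \<Rightarrow> nat \<Rightarrow> real" and \<alpha> :: "nat \<Rightarrow> real"
  assumes finN: "finite N" and Nne: "N \<noteq> {}"
    and step: "\<forall>t\<ge>1. \<forall>i\<in>N. x i t = a i t - \<alpha> (t-1) * dd i t \<and> stepok N bg n (\<lambda>j. x j (t-1)) (a i t) i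
                 \<and> stepok N bg n (\<lambda>j. - x j (t-1)) (- a i t) i"
    and ddL: "\<forall>t\<ge>1. \<forall>i\<in>N. \<bar>dd i t\<bar> \<le> L"
    and apos: "\<forall>t. \<alpha> t \<ge> 0"
    and sgn: "\<forall>t\<ge>1. \<forall>i\<in>N. dd i t * (x i (t-1) - z) \<ge> 0"
    and L0: "L \<ge> 0"
  shows "(Max ((\<lambda>i. \<bar>x i (Suc t) - z\<bar>) ` N))^2 \<le> (Max ((\<lambda>i. \<bar>x i t - z\<bar>) ` N))^2
          + 2 * L * \<alpha> t * (Max ((\<lambda>i. x i t) ` N) - Min ((\<lambda>i. x i t) ` N)) + L^2 * (\<alpha> t)^2"
proof -
  define U where "U = Max ((\<lambda>i. \<bar>x i t - z\<bar>) ` N)"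
  define r where "r = Max ((\<lambda>i. x i t) ` N) - Min ((\<lambda>i. x i t) ` N)"
  obtain i where i: "i \<in> N" and iU: "Max ((\<lambda>i. \<bar>x i (Suc t) - z\<bar>) ` N) = \<bar>x i (Suc t) - z\<bar>"
    using Max_img_in[OF finN Nne] by blast
  have s1: "x i (Suc t) = a i (Suc t) - \<alpha> t * dd i (Suc t) \<and> stepok N bg n (\<lambda>j. x j t) (a i (Suc t)) i
                 \<and> stepok N bg n (\<lambda>j. - x j t) (- a i (Suc t)) i"
    using step[rule_format, of "Suc t" i] i by simp
  define aa where "aa = a i (Suc t)"
  define d where "d = dd i (Suc t)"
  have xe: "x i (Suc t) = aa - \<alpha> t * d" using s1 unfolding aa_def d_def by blast
  have dL: "\<bar>d\<bar> \<le> L" using ddL i unfolding d_def by simp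
  have sg: "d * (x i t - z) \<ge> 0" using sgn[rule_format, of "Suc t" i] i unfolding d_def by simp
  have Ub: "\<bar>x j t - z\<bar> \<le> U" if "j \<in> N" for j unfolding U_def using Max_img_ge[OF finN that, of "\<lambda>i. \<bar>x i t - z\<bar>"] by simp
  have U0: "U \<ge> 0" using Ub[OF i] by simp
  have a1: "aa \<le> z + U" unfolding aa_def
    by (rule stepok_up[OF conjunct1[OF conjunct2[OF s1]]]) (use Ub in \<open>force simp: abs_le_iff\<close>)
  have a2: "- aa \<le> - (z - U)" unfolding aa_def
    by (rule stepok_up[OF conjunct2[OF conjunct2[OF s1]]]) (use Ub in \<open>force simp: abs_le_iff\<close>)
  have az: "\<bar>aa - z\<bar> \<le> U" using a1 a2 by (simp add: abs_le_iff)
  have mx: "\<forall>j\<in>N. x j t \<le> Max ((\<lambda>i. x i t) ` N)"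
  proof
    fix j assume j: "j \<in> N" show "x j t \<le> Max ((\<lambda>i. x i t) ` N)" using Max_img_ge[OF finN j, of "\<lambda>i. x i t"] by simp
  qed
  have mn: "\<forall>j\<in>N. - x j t \<le> - Min ((\<lambda>i. x i t) ` N)"
  proof
    fix j assume j: "j \<in> N" show "- x j t \<le> - Min ((\<lambda>i. x i t) ` N)" using Min_img_le[OF finN j, of "\<lambda>i. x i t"] by simp
  qed
  have b1: "aa \<le> Max ((\<lambda>i. x i t) ` N)" unfolding aa_def by (rule stepok_up[OF conjunct1[OF conjunct2[OF s1]] mx])
  have b2: "- aa \<le> - Min ((\<lambda>i. x i t) ` N)" unfolding aa_def by (rule stepok_up[OF conjunct2[OF conjunct2[OF s1]] mn])
  have ax: "\<bar>aa - x i t\<bar> \<le> r" using b1 b2 mx mn i unfolding r_def by (force simp: abs_le_iff)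
  have e1: "(x i (Suc t) - z)^2 = (aa - z)^2 - 2 * \<alpha> t * (d * (aa - z)) + (\<alpha> t)^2 * d^2"
    unfolding xe by (simp add: power2_eq_square algebra_simps)
  have e2: "d * (aa - z) \<ge> - (L * r)"
  proof -
    have "\<bar>d * (aa - x i t)\<bar> = \<bar>d\<bar> * \<bar>aa - x i t\<bar>" by (simp add: abs_mult)
    also have "\<dots> \<le> L * r" by (rule mult_mono[OF dL ax L0]) simp
    finally have "d * (aa - x i t) \<ge> - (L * r)" by (simp add: abs_le_iff)
    moreover have "d * (aa - z) = d * (x i t - z) + d * (aa - x i t)" by (simp add: algebra_simps)
    ultimately show ?thesis using sg by linarith
  qed
  have e3: "(aa - z)^2 \<le> U^2"
  proof -
    have "\<bar>aa - z\<bar> \<le> \<bar>U\<bar>" using az U0 by simp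
    then show ?thesis by (simp only: abs_le_square_iff)
  qed
  have e4: "d^2 \<le> L^2"
  proof -
    have "\<bar>d\<bar> \<le> \<bar>L\<bar>" using dL L0 by simp
    then show ?thesis by (simp only: abs_le_square_iff)
  qed
  have e5: "- 2 * \<alpha> t * (d * (aa - z)) \<le> 2 * \<alpha> t * (L * r)"
  proof -
    have "2 * \<alpha> t * (- (L * r)) \<le> 2 * \<alpha> t * (d * (aa - z))" by (rule mult_left_mono[OF e2]) (use apos in simp)
    then show ?thesis by simp
  qed
  have e6: "(\<alpha> t)^2 * d^2 \<le> (\<alpha> t)^2 * L^2" by (rule mult_left_mono[OF e4]) simp
  have "(Max ((\<lambda>i. \<bar>x i (Suc t) - z\<bar>) ` N))^2 = (x i (Suc t) - z)^2" unfolding iU by simp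
  also have "\<dots> \<le> U^2 + 2 * L * \<alpha> t * r + L^2 * (\<alpha> t)^2" using e1 e3 e5 e6 by (simp add: algebra_simps)
  finally show ?thesis unfolding U_def r_def .
qed

lemma close_lim:
  fixes f g r :: "nat \<Rightarrow> real"
  assumes f: "f \<longlonglongrightarrow> l" and cl: "\<forall>t. \<bar>g t - f t\<bar> \<le> r t" and r: "r \<longlonglongrightarrow> 0"
  shows "g \<longlonglongrightarrow> l"
proof -
  have mr: "(\<lambda>t. - r t) \<longlonglongrightarrow> 0" using tendsto_minus[OF r] by simp
  have "(\<lambda>t. g t - f t) \<longlonglongrightarrow> 0"
  proof (rule tendsto_sandwich[OF _ _ mr r])
    have "- r t \<le> g t - f t" for t using spec[OF cl, of t] by (simp add: abs_le_iff)
    then have "\<forall>t. - r t \<le> g t - f t" by blast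
    then show "\<forall>\<^sub>F t in sequentially. - r t \<le> g t - f t" by (rule always_eventually)
    have "g t - f t \<le> r t" for t using spec[OF cl, of t] by (simp add: abs_le_iff)
    then have "\<forall>t. g t - f t \<le> r t" by blast
    then show "\<forall>\<^sub>F t in sequentially. g t - f t \<le> r t" by (rule always_eventually)
  qed
  then have "(\<lambda>t. (g t - f t) + f t) \<longlonglongrightarrow> 0 + l" by (intro tendsto_add f)
  then show ?thesis by simp
qed

lemma squeeze0:
  fixes u v :: "nat \<Rightarrow> real"
  assumes "\<forall>t. 0 \<le> u t \<and> u t \<le> v t" and "v \<longlonglongrightarrow> 0"
  shows "u \<longlonglongrightarrow> 0"
proof (rule tendsto_sandwich[OF _ _ tendsto_const assms(2)])
  have "\<forall>t. 0 \<le> u t" using assms(1) by simp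
  then show "\<forall>\<^sub>F t in sequentially. 0 \<le> u t" by (rule always_eventually)
  have "\<forall>t. u t \<le> v t" using assms(1) by simp
  then show "\<forall>\<^sub>F t in sequentially. u t \<le> v t" by (rule always_eventually)
qed

lemma argmin_convex:
  fixes hh :: "real \<Rightarrow> real"
  assumes cv: "convex_on UNIV hh" and p: "p \<in> argmin_set hh" and q: "q \<in> argmin_set hh"
    and pw: "p \<le> w" and wq: "w \<le> q"
  shows "w \<in> argmin_set hh"
proof (cases "p = q")
  case True then have "w = p" using pw wq by simp
  then show ?thesis using p by simp
next
  case False
  then have pq: "p < q" using pw wq by simp
  define t where "t = (w - p) / (q - p)"
  have t0: "0 \<le> t" and t1: "t \<le> 1" unfolding t_def using pq pw wq by (auto simp: divide_le_eq)
  have tt: "t * (q - p) = w - p" unfolding t_def using pq by simp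
  have "(1 - t) * p + t * q = p + t * (q - p)" by (simp add: algebra_simps)
  then have weq: "(1 - t) *\<^sub>R p + t *\<^sub>R q = w" using tt by simp
  have hw: "hh w \<le> (1 - t) * hh p + t * hh q"
    using convex_onD[OF cv t0 t1, of p q] weq by simp
  show ?thesis unfolding argmin_set_def
  proof (rule CollectI, rule allI)
    fix y
    have "hh p \<le> hh y" "hh q \<le> hh y" using p q unfolding argmin_set_def by blast+
    then have "(1 - t) * hh p + t * hh q \<le> (1 - t) * hh y + t * hh y"
      using t0 t1 by (intro add_mono mult_left_mono) auto
    then show "hh w \<le> hh y" using hw by (simp add: algebra_simps)
  qed
qed

locale ctx =
  fixes n k f :: nat and E :: "(nat \<times> nat) set" and L :: real and h :: "nat \<Rightarrow> real \<Rightarrow> real"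
    and A :: "nat \<Rightarrow> nat \<Rightarrow> real" and \<alpha> :: "nat \<Rightarrow> real" and x a dd :: "nat \<Rightarrow> nat \<Rightarrow> real"
    and N :: "nat set"
  assumes finN: "finite N" and Nne: "N \<noteq> {}" and cN: "card N \<le> n" and n1: "n \<ge> 1" and k1: "k \<ge> 1"
    and step: "\<forall>t\<ge>1. \<forall>i\<in>N. x i t = a i t - \<alpha> (t-1) * dd i t \<and> stepok N (big E f) n (\<lambda>j. x j (t-1)) (a i t) i
                 \<and> stepok N (big E f) n (\<lambda>j. - x j (t-1)) (- a i t) i"
    and sgt: "\<forall>t\<ge>1. \<forall>i\<in>N. subgradient (\<lambda>y. \<Sum>j=1..k. A j i * h j y) (x i (t-1)) (dd i t)"
    and ddL: "\<forall>t\<ge>1. \<forall>i\<in>N. \<bar>dd i t\<bar> \<le> L"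
    and L0: "L \<ge> 0" and apos: "\<forall>t. \<alpha> t \<ge> 0" and amono: "\<forall>t. \<alpha> (t + 1) \<le> \<alpha> t"
    and div: "filterlim (\<lambda>M. \<Sum>t<M. \<alpha> t) at_top sequentially"
    and sq: "summable (\<lambda>t. (\<alpha> t)\<^sup>2)"
    and adm: "\<forall>j\<in>{1..k}. admissible L (h j)" and Apos: "\<forall>j\<in>{1..k}. \<forall>i\<in>N. A j i \<ge> 0"
    and G1p: "\<forall>Lo Hi. Lo \<subseteq> N \<and> Hi \<subseteq> N \<and> Lo \<union> Hi = N \<and> Lo \<noteq> N \<and> Hi \<noteq> N
              \<longrightarrow> (\<exists>i\<in>N - Lo. big E f Lo i) \<or> (\<exists>i\<in>N - Hi. big E f Hi i)"
    and G2p: "\<forall>j0\<in>{1..k}. \<forall>Lc. {i\<in>N. A j0 i > 0} \<subseteq> Lc \<and> Lc \<subseteq> N \<and> Lc \<noteq> N \<longrightarrow> (\<exists>i\<in>N - Lc. big E f Lc i)"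
    and Xne: "(\<Inter>j\<in>{1..k}. argmin_set (h j)) \<noteq> {}"
begin

definition Xs where "Xs = (\<Inter>j\<in>{1..k}. argmin_set (h j))"
definition Mx where "Mx t = Max ((\<lambda>i. x i t) ` N)"
definition Mn where "Mn t = Min ((\<lambda>i. x i t) ` N)"
definition r where "r t = Mx t - Mn t"

lemma bounds: "i \<in> N \<Longrightarrow> Mn t \<le> x i t \<and> x i t \<le> Mx t"
  unfolding Mn_def Mx_def using Min_img_le[OF finN, of i "\<lambda>i. x i t"] Max_img_ge[OF finN, of i "\<lambda>i. x i t"] by simp

lemma r0: "r t \<ge> 0"
proof -
  obtain i where "i \<in> N" using Nne by blast
  then show ?thesis using bounds[of i t] unfolding r_def by simp
qed

lemma close: "i \<in> N \<Longrightarrow> j \<in> N \<Longrightarrow> \<bar>x i t - x j t\<bar> \<le> r t"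
  using bounds[of i t] bounds[of j t] unfolding r_def by (simp add: abs_le_iff)

lemma a_bounds: "i \<in> N \<Longrightarrow> Mn t \<le> a i (Suc t) \<and> a i (Suc t) \<le> Mx t"
proof -
  assume i: "i \<in> N"
  have s1: "x i (Suc t) = a i (Suc t) - \<alpha> t * dd i (Suc t) \<and> stepok N (big E f) n (\<lambda>j. x j t) (a i (Suc t)) i
                 \<and> stepok N (big E f) n (\<lambda>j. - x j t) (- a i (Suc t)) i"
    using step[rule_format, of "Suc t" i] i by simp
  have m1: "\<forall>j\<in>N. x j t \<le> Mx t" using bounds by blast
  have m2: "\<forall>j\<in>N. - x j t \<le> - Mn t" using bounds by force
  have "a i (Suc t) \<le> Mx t" by (rule stepok_up[OF conjunct1[OF conjunct2[OF s1]] m1])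
  moreover have "- a i (Suc t) \<le> - Mn t" by (rule stepok_up[OF conjunct2[OF conjunct2[OF s1]] m2])
  ultimately show ?thesis by simp
qed

lemma alpha0: "\<alpha> \<longlonglongrightarrow> 0"
proof -
  have "(\<lambda>t. (\<alpha> t)\<^sup>2) \<longlonglongrightarrow> 0" by (rule summable_LIMSEQ_zero[OF sq])
  then have "(\<lambda>t. sqrt ((\<alpha> t)\<^sup>2)) \<longlonglongrightarrow> sqrt 0" by (rule tendsto_real_sqrt)
  moreover have "(\<lambda>t. sqrt ((\<alpha> t)\<^sup>2)) = \<alpha>" using apos by (auto simp: fun_eq_iff)
  ultimately show ?thesis by simp
qed

definition lam where "lam = 1 - 1 / (2 * (real n + 1)^n)"

lemma lam: "0 \<le> lam" "lam < 1"
proof -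
  have K1: "(real n + 1)^n \<ge> 1" by (rule one_le_power) simp
  then have K2: "2 * (real n + 1)^n \<ge> 1" by linarith
  have "1 / (2 * (real n + 1)^n) \<le> 1 / 1" by (rule divide_left_mono) (use K2 in auto)
  moreover have "0 < 1 / (2 * (real n + 1)^n)" using K2 by simp
  ultimately have "1 / (2 * (real n + 1)^n) \<le> 1" and "0 < 1 / (2 * (real n + 1)^n)" by simp_all
  then show "0 \<le> lam" "lam < 1" unfolding lam_def by linarith+
qed

lemma crec: "r (s + n) \<le> lam * r s + 2 * real n * L * \<alpha> s"
  using cons_rec[OF finN Nne cN step ddL apos amono G1p L0, of s]
  unfolding r_def Mx_def Mn_def lam_def .

lemma r_lim: "r \<longlonglongrightarrow> 0"
proof (rule tendsto_rec[OF _ lam(1) lam(2) _ _ n1])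
  show "\<forall>s. 0 \<le> r s" using r0 by simp
  show "\<forall>s. r (s + n) \<le> lam * r s + 2 * real n * L * \<alpha> s" using crec by simp
  have "(\<lambda>s. 2 * real n * L * \<alpha> s) \<longlonglongrightarrow> 2 * real n * L * 0" by (intro tendsto_mult tendsto_const alpha0)
  then show "(\<lambda>s. 2 * real n * L * \<alpha> s) \<longlonglongrightarrow> 0" by simp
qed

lemma ar_summable: "summable (\<lambda>t. \<alpha> t * r t)"
proof (rule summable_rec[OF _ _ _ lam(1) lam(2)])
  show "\<forall>s. 0 \<le> \<alpha> s * r s" using apos r0 by simp
  show "\<forall>s. 0 \<le> 2 * real n * L * (\<alpha> s)\<^sup>2" using L0 by simp
  show "summable (\<lambda>s. 2 * real n * L * (\<alpha> s)\<^sup>2)" by (rule summable_mult[OF sq])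
  show "\<forall>s. \<alpha> (s + n) * r (s + n) \<le> lam * (\<alpha> s * r s) + 2 * real n * L * (\<alpha> s)\<^sup>2"
  proof
    fix s
    have an: "\<alpha> (s + n) \<le> \<alpha> s" by (rule alpha_anti[OF amono]) simp
    have inner: "0 \<le> lam * r s + 2 * real n * L * \<alpha> s" using lam(1) r0[of s] L0 apos by simp
    have "\<alpha> (s + n) * r (s + n) \<le> \<alpha> (s + n) * (lam * r s + 2 * real n * L * \<alpha> s)"
      by (rule mult_left_mono[OF crec]) (use apos in simp)
    also have "\<dots> \<le> \<alpha> s * (lam * r s + 2 * real n * L * \<alpha> s)" by (rule mult_right_mono[OF an inner])
    also have "\<dots> = lam * (\<alpha> s * r s) + 2 * real n * L * (\<alpha> s)\<^sup>2" by (simp add: algebra_simps power2_eq_square)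
    finally show "\<alpha> (s + n) * r (s + n) \<le> lam * (\<alpha> s * r s) + 2 * real n * L * (\<alpha> s)\<^sup>2" .
  qed
qed

lemma g_min_N: "z \<in> Xs \<Longrightarrow> i \<in> N \<Longrightarrow> (\<Sum>j=1..k. A j i * h j z) \<le> (\<Sum>j=1..k. A j i * h j y)"
  by (rule g_min) (use Apos in \<open>auto simp: Xs_def\<close>)

lemma sgn: "z \<in> Xs \<Longrightarrow> \<forall>t\<ge>1. \<forall>i\<in>N. dd i t * (x i (t-1) - z) \<ge> 0"
proof (intro allI impI ballI)
  fix t i :: nat assume z: "z \<in> Xs" and t: "1 \<le> t" and i: "i \<in> N"
  show "dd i t * (x i (t-1) - z) \<ge> 0"
    by (rule subgrad_sign[OF sgt[rule_format, OF t i]]) (rule g_min_N[OF z i])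
qed

definition U where "U z t = Max ((\<lambda>i. \<bar>x i t - z\<bar>) ` N)"

lemma U_conv: assumes z: "z \<in> Xs" shows "convergent (U z)"
proof -
  define V where "V t = (U z t)^2" for t
  define e where "e t = 2 * L * (\<alpha> t * r t) + L^2 * (\<alpha> t)^2" for t
  have Vrec: "\<forall>t. V (Suc t) \<le> V t + e t"
  proof
    fix t
    show "V (Suc t) \<le> V t + e t"
      using fejer_step[OF finN Nne step ddL apos sgn[OF z] L0, of t]
      unfolding V_def e_def U_def r_def Mx_def Mn_def by (simp add: algebra_simps)
  qed
  have e0: "\<forall>t. 0 \<le> e t" unfolding e_def using L0 apos r0 by simp
  have se: "summable e" unfolding e_def
    by (intro summable_add summable_mult ar_summable sq)
  have "convergent V" by (rule conv_rec[OF _ Vrec e0 se]) (simp add: V_def)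
  then obtain l where l: "V \<longlonglongrightarrow> l" unfolding convergent_def by blast
  have U0: "U z t \<ge> 0" for t
  proof -
    obtain i where "i \<in> N" using Nne by blast
    then show ?thesis unfolding U_def using Max_img_ge[OF finN, of i "\<lambda>i. \<bar>x i t - z\<bar>"] by simp
  qed
  have "(\<lambda>t. sqrt (V t)) \<longlonglongrightarrow> sqrt l" by (rule tendsto_real_sqrt[OF l])
  moreover have "(\<lambda>t. sqrt (V t)) = U z" unfolding V_def using U0 by (auto simp: fun_eq_iff)
  ultimately show ?thesis unfolding convergent_def by auto
qed

lemma y_lim:
  assumes z: "z \<in> Xs" and i0: "i0 \<in> N"
  shows "\<exists>l. (\<lambda>t. \<bar>x i0 t - z\<bar>) \<longlonglongrightarrow> l"
proof -
  obtain l where l: "U z \<longlonglongrightarrow> l" using U_conv[OF z] unfolding convergent_def by blast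
  have cl: "\<forall>t. \<bar>\<bar>x i0 t - z\<bar> - U z t\<bar> \<le> r t"
  proof
    fix t
    have u1: "\<bar>x i0 t - z\<bar> \<le> U z t" unfolding U_def using Max_img_ge[OF finN i0, of "\<lambda>i. \<bar>x i t - z\<bar>"] by simp
    obtain j where j: "j \<in> N" and uj: "U z t = \<bar>x j t - z\<bar>" unfolding U_def using Max_img_in[OF finN Nne] by blast
    have "\<bar>x j t - x i0 t\<bar> \<le> r t" by (rule close[OF j i0])
    then have "U z t \<le> \<bar>x i0 t - z\<bar> + r t" unfolding uj by (simp add: abs_le_iff abs_if split: if_splits)
    then show "\<bar>\<bar>x i0 t - z\<bar> - U z t\<bar> \<le> r t" using u1 by (simp add: abs_le_iff)
  qed
  show ?thesis using close_lim[OF l cl r_lim] by blast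
qed

end

context ctx begin

lemma step1: "\<forall>t\<ge>1. \<forall>i\<in>N. x i t = a i t - \<alpha> (t-1) * dd i t \<and> stepok N (big E f) n (\<lambda>j. x j (t-1)) (a i t) i"
  using step by blast

lemma step1n: "\<forall>t\<ge>1. \<forall>i\<in>N. - x i t = - a i t - \<alpha> (t-1) * (- dd i t) \<and> stepok N (big E f) n (\<lambda>j. - x j (t-1)) (- a i t) i"
  using step by simp

lemma Xs_arg: "z \<in> Xs \<Longrightarrow> \<forall>j\<in>{1..k}. z \<in> argmin_set (h j)"
  unfolding Xs_def by blast

lemma pos_min:
  fixes j0 :: nat
  defines "S0 \<equiv> {i\<in>N. A j0 i > 0}"
  shows "Min (insert 1 ((\<lambda>i. A j0 i) ` S0)) > 0" and "\<forall>i\<in>S0. Min (insert 1 ((\<lambda>i. A j0 i) ` S0)) \<le> A j0 i"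
proof -
  have fS: "finite S0" unfolding S0_def using finN by simp
  have fin: "finite (insert 1 ((\<lambda>i. A j0 i) ` S0))" using fS by simp
  show "Min (insert 1 ((\<lambda>i. A j0 i) ` S0)) > 0"
    unfolding Min_gr_iff[OF fin insert_not_empty] unfolding S0_def by auto
  show "\<forall>i\<in>S0. Min (insert 1 ((\<lambda>i. A j0 i) ` S0)) \<le> A j0 i"
  proof
    fix i assume "i \<in> S0"
    then have "A j0 i \<in> insert 1 ((\<lambda>i. A j0 i) ` S0)" by simp
    then show "Min (insert 1 ((\<lambda>i. A j0 i) ` S0)) \<le> A j0 i" by (rule Min_le[OF fin])
  qed
qed

lemma above_contra:
  assumes q: "q \<in> Xs" and qmax: "\<forall>z\<in>Xs. z \<le> q" and qc: "q < c" and lev: "\<forall>t\<ge>t0. \<forall>i\<in>N. c \<le> x i t"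
  shows False
proof -
  have "c \<notin> Xs" using qmax qc by force
  then obtain j0 where j0: "j0 \<in> {1..k}" and cj: "c \<notin> argmin_set (h j0)" unfolding Xs_def by blast
  have qa: "\<forall>j\<in>{1..k}. q \<in> argmin_set (h j)" by (rule Xs_arg[OF q])
  obtain y where "h j0 y < h j0 c" using cj unfolding argmin_set_def by (auto simp: not_le)
  moreover have "h j0 q \<le> h j0 y" using qa j0 unfolding argmin_set_def by blast
  ultimately have hq: "h j0 q < h j0 c" by simp
  define \<delta>0 where "\<delta>0 = (h j0 c - h j0 q) / (c - q)"
  have d0: "\<delta>0 > 0" unfolding \<delta>0_def using hq qc by simp
  define S0 where "S0 = {i\<in>N. A j0 i > 0}"
  define m0 where "m0 = Min (insert 1 ((\<lambda>i. A j0 i) ` S0))"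
  have m0: "m0 > 0" "\<forall>i\<in>S0. m0 \<le> A j0 i" unfolding m0_def S0_def using pos_min by blast+
  define \<delta> where "\<delta> = m0 * \<delta>0"
  have dpos: "\<delta> > 0" unfolding \<delta>_def using m0 d0 by simp
  have xc: "c \<le> x i (t - 1)" if "t > t0" "i \<in> N" for t i using lev that by auto
  have ddpos: "\<forall>t>t0. \<forall>i\<in>N. dd i t \<ge> 0"
  proof (intro allI impI ballI)
    fix t i assume t: "t > t0" and i: "i \<in> N"
    have "dd i t * (x i (t-1) - q) \<ge> 0" using sgn[OF q] t i by simp
    moreover have "x i (t-1) - q > 0" using xc[OF t i] qc by simp
    ultimately show "dd i t \<ge> 0" by (simp add: zero_le_mult_iff)
  qed
  have ddS: "\<forall>t>t0. \<forall>i\<in>S0. dd i t \<ge> \<delta>"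
  proof (intro allI impI ballI)
    fix t i assume t: "t > t0" and iS: "i \<in> S0"
    have i: "i \<in> N" using iS unfolding S0_def by blast
    have Ap: "\<forall>j\<in>{1..k}. A j i \<ge> 0" using Apos i by blast
    have sg: "subgradient (\<lambda>y. \<Sum>j=1..k. A j i * h j y) (x i (t-1)) (dd i t)" using sgt t i by simp
    have "dd i t \<ge> A j0 i * \<delta>0"
      unfolding \<delta>0_def by (rule drift_above_d[where A=A and h=h and i=i and k=k, OF adm Ap qa qc j0 xc[OF t i] sg])
    moreover have "m0 * \<delta>0 \<le> A j0 i * \<delta>0" using m0(2) iS d0 by (simp add: mult_right_mono)
    ultimately show "dd i t \<ge> \<delta>" unfolding \<delta>_def by linarith
  qed
  have G: "\<forall>Lc. S0 \<subseteq> Lc \<and> Lc \<subseteq> N \<and> Lc \<noteq> N \<longrightarrow> (\<exists>i\<in>N - Lc. big E f Lc i)"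
    using G2p j0 unfolding S0_def by blast
  have S0N: "S0 \<subseteq> N" unfolding S0_def by blast
  show False by (rule drift_contra[OF finN cN step1 ddpos ddS dpos apos amono G S0N lev Nne div])
qed

lemma below_contra:
  assumes p: "p \<in> Xs" and pmin: "\<forall>z\<in>Xs. p \<le> z" and cp: "c < p" and lev: "\<forall>t\<ge>t0. \<forall>i\<in>N. x i t \<le> c"
  shows False
proof -
  have "c \<notin> Xs" using pmin cp by force
  then obtain j0 where j0: "j0 \<in> {1..k}" and cj: "c \<notin> argmin_set (h j0)" unfolding Xs_def by blast
  have pa: "\<forall>j\<in>{1..k}. p \<in> argmin_set (h j)" by (rule Xs_arg[OF p])
  obtain y where "h j0 y < h j0 c" using cj unfolding argmin_set_def by (auto simp: not_le)
  moreover have "h j0 p \<le> h j0 y" using pa j0 unfolding argmin_set_def by blast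
  ultimately have hp: "h j0 p < h j0 c" by simp
  define \<delta>0 where "\<delta>0 = (h j0 c - h j0 p) / (p - c)"
  have d0: "\<delta>0 > 0" unfolding \<delta>0_def using hp cp by simp
  define S0 where "S0 = {i\<in>N. A j0 i > 0}"
  define m0 where "m0 = Min (insert 1 ((\<lambda>i. A j0 i) ` S0))"
  have m0: "m0 > 0" "\<forall>i\<in>S0. m0 \<le> A j0 i" unfolding m0_def S0_def using pos_min by blast+
  define \<delta> where "\<delta> = m0 * \<delta>0"
  have dpos: "\<delta> > 0" unfolding \<delta>_def using m0 d0 by simp
  have xc: "x i (t - 1) \<le> c" if "t > t0" "i \<in> N" for t i using lev that by auto
  have ddpos: "\<forall>t>t0. \<forall>i\<in>N. - dd i t \<ge> 0"
  proof (intro allI impI ballI)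
    fix t i assume t: "t > t0" and i: "i \<in> N"
    have "dd i t * (x i (t-1) - p) \<ge> 0" using sgn[OF p] t i by simp
    moreover have "x i (t-1) - p < 0" using xc[OF t i] cp by simp
    ultimately show "- dd i t \<ge> 0" by (simp add: zero_le_mult_iff)
  qed
  have ddS: "\<forall>t>t0. \<forall>i\<in>S0. - dd i t \<ge> \<delta>"
  proof (intro allI impI ballI)
    fix t i assume t: "t > t0" and iS: "i \<in> S0"
    have i: "i \<in> N" using iS unfolding S0_def by blast
    have Ap: "\<forall>j\<in>{1..k}. A j i \<ge> 0" using Apos i by blast
    have sg: "subgradient (\<lambda>y. \<Sum>j=1..k. A j i * h j y) (x i (t-1)) (dd i t)" using sgt t i by simp
    have "- dd i t \<ge> A j0 i * \<delta>0"
      unfolding \<delta>0_def by (rule drift_below_d[where A=A and h=h and i=i and k=k, OF adm Ap pa cp j0 xc[OF t i] sg])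
    moreover have "m0 * \<delta>0 \<le> A j0 i * \<delta>0" using m0(2) iS d0 by (simp add: mult_right_mono)
    ultimately show "- dd i t \<ge> \<delta>" unfolding \<delta>_def by linarith
  qed
  have G: "\<forall>Lc. S0 \<subseteq> Lc \<and> Lc \<subseteq> N \<and> Lc \<noteq> N \<longrightarrow> (\<exists>i\<in>N - Lc. big E f Lc i)"
    using G2p j0 unfolding S0_def by blast
  have S0N: "S0 \<subseteq> N" unfolding S0_def by blast
  have lev': "\<forall>t\<ge>t0. \<forall>i\<in>N. - c \<le> - x i t" using lev by simp
  show False
    by (rule drift_contra[where x="\<lambda>i t. - x i t" and a="\<lambda>i t. - a i t" and dd="\<lambda>i t. - dd i t",
          OF finN cN step1n ddpos ddS dpos apos amono G S0N lev' Nne div])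
qed

lemma ystep: assumes i0: "i0 \<in> N" shows "(\<lambda>t. x i0 (Suc t) - x i0 t) \<longlonglongrightarrow> 0"
proof -
  have b: "\<bar>x i0 (Suc t) - x i0 t\<bar> \<le> r t + L * \<alpha> t" for t
  proof -
    have s1: "x i0 (Suc t) = a i0 (Suc t) - \<alpha> t * dd i0 (Suc t)" using step[rule_format, of "Suc t" i0] i0 by simp
    have ab: "\<bar>a i0 (Suc t) - x i0 t\<bar> \<le> r t" using a_bounds[OF i0, of t] bounds[OF i0, of t] unfolding r_def
      by (simp add: abs_le_iff)
    have "\<bar>\<alpha> t * dd i0 (Suc t)\<bar> = \<alpha> t * \<bar>dd i0 (Suc t)\<bar>" using apos by (simp add: abs_mult)
    also have "\<dots> \<le> \<alpha> t * L" using ddL i0 apos by (simp add: mult_left_mono)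
    finally have "\<bar>\<alpha> t * dd i0 (Suc t)\<bar> \<le> L * \<alpha> t" by (simp add: mult.commute)
    then show ?thesis using ab s1 by (simp add: abs_le_iff)
  qed
  have "(\<lambda>t. r t + L * \<alpha> t) \<longlonglongrightarrow> 0 + L * 0" by (intro tendsto_add tendsto_mult tendsto_const r_lim alpha0)
  then have v0: "(\<lambda>t. r t + L * \<alpha> t) \<longlonglongrightarrow> 0" by simp
  have "(\<lambda>t. \<bar>x i0 (Suc t) - x i0 t\<bar>) \<longlonglongrightarrow> 0" by (rule squeeze0[OF _ v0]) (use b in simp)
  then show ?thesis by (simp add: tendsto_rabs_zero_iff)
qed

end

context ctx begin

lemma Xs_convex:
  assumes p: "p \<in> Xs" and q: "q \<in> Xs" and pw: "p \<le> w" and wq: "w \<le> q"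
  shows "w \<in> Xs"
proof -
  have "w \<in> argmin_set (h j)" if j: "j \<in> {1..k}" for j
  proof (rule argmin_convex[OF _ _ _ pw wq])
    show "convex_on UNIV (h j)" using adm j unfolding admissible_def by blast
    show "p \<in> argmin_set (h j)" using Xs_arg[OF p] j by blast
    show "q \<in> argmin_set (h j)" using Xs_arg[OF q] j by blast
  qed
  then show ?thesis unfolding Xs_def by blast
qed

lemma main_ctx: "\<exists>w\<in>Xs. \<forall>i\<in>N. (\<lambda>t. \<bar>x i t - w\<bar>) \<longlonglongrightarrow> 0"
proof -
  have cX: "compact Xs" unfolding Xs_def
  proof (rule compact_Inter)
    show "\<And>S. S \<in> (\<lambda>j. argmin_set (h j)) ` {1..k} \<Longrightarrow> compact S" using adm unfolding admissible_def by blast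
    show "(\<lambda>j. argmin_set (h j)) ` {1..k} \<noteq> {}" using k1 by simp
  qed
  have Xne': "Xs \<noteq> {}" using Xne unfolding Xs_def .
  obtain q where q: "q \<in> Xs" "\<forall>z\<in>Xs. z \<le> q" using compact_attains_sup[OF cX Xne'] by blast
  obtain p where p: "p \<in> Xs" "\<forall>z\<in>Xs. p \<le> z" using compact_attains_inf[OF cX Xne'] by blast
  obtain i0 where i0: "i0 \<in> N" using Nne by blast
  define y where "y t = x i0 t" for t
  obtain lq where lq: "(\<lambda>t. \<bar>y t - q\<bar>) \<longlonglongrightarrow> lq" using y_lim[OF q(1) i0] unfolding y_def by blast
  obtain lp where lp: "(\<lambda>t. \<bar>y t - p\<bar>) \<longlonglongrightarrow> lp" using y_lim[OF p(1) i0] unfolding y_def by blast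
  have lq0: "lq \<ge> 0" by (rule LIMSEQ_le_const[OF lq]) simp
  have lp0: "lp \<ge> 0" by (rule LIMSEQ_le_const[OF lp]) simp
  have fin: "\<forall>i\<in>N. (\<lambda>t. \<bar>x i t - w\<bar>) \<longlonglongrightarrow> 0" if w0: "(\<lambda>t. \<bar>y t - w\<bar>) \<longlonglongrightarrow> 0" for w
  proof
    fix i assume i: "i \<in> N"
    have v: "(\<lambda>t. r t + \<bar>y t - w\<bar>) \<longlonglongrightarrow> 0 + 0" by (intro tendsto_add r_lim w0)
    show "(\<lambda>t. \<bar>x i t - w\<bar>) \<longlonglongrightarrow> 0"
    proof (rule squeeze0)
      show "(\<lambda>t. r t + \<bar>y t - w\<bar>) \<longlonglongrightarrow> 0" using v by simp
      show "\<forall>t. 0 \<le> \<bar>x i t - w\<bar> \<and> \<bar>x i t - w\<bar> \<le> r t + \<bar>y t - w\<bar>"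
      proof
        fix t
        have "\<bar>x i t - y t\<bar> \<le> r t" unfolding y_def by (rule close[OF i i0])
        then show "0 \<le> \<bar>x i t - w\<bar> \<and> \<bar>x i t - w\<bar> \<le> r t + \<bar>y t - w\<bar>" by (simp add: abs_le_iff abs_if split: if_splits)
      qed
    qed
  qed
  have ys: "(\<lambda>t. y (Suc t) - y t) \<longlonglongrightarrow> 0" unfolding y_def by (rule ystep[OF i0])
  show ?thesis
  proof (cases "lq = 0")
    case True
    then show ?thesis using fin lq q(1) by blast
  next
    case False
    then have lqp: "lq > 0" using lq0 by simp
    show ?thesis
    proof (cases "lp = 0")
      case True
      then show ?thesis using fin lp p(1) by blast
    next
      case False
      then have lpp: "lp > 0" using lp0 by simp
      define m where "m = min lq lp / 4"
      have mpos: "m > 0" unfolding m_def using lqp lpp by simp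
      obtain t2 where t2: "\<forall>t\<ge>t2. norm (r t - 0) < m" using LIMSEQ_D[OF r_lim mpos] by blast
      have rs: "r t < m" if "t \<ge> t2" for t
      proof -
        have "norm (r t - 0) < m" using t2 that by blast
        then show ?thesis using r0[of t] by simp
      qed
      have cl: "\<bar>x i t - y t\<bar> \<le> r t" if "i \<in> N" for i t unfolding y_def by (rule close[OF that i0])
      have "(\<exists>t1. \<forall>t\<ge>t1. y t > q + lq/2) \<or> (\<exists>t1. \<forall>t\<ge>t1. y t < q - lq/2)"
        by (rule sign_eventually[OF lq lqp ys])
      then show ?thesis
      proof
        assume "\<exists>t1. \<forall>t\<ge>t1. y t > q + lq/2"
        then obtain t1 where t1: "\<forall>t\<ge>t1. y t > q + lq/2" by blast
        have lev: "\<forall>t\<ge>max t1 t2. \<forall>i\<in>N. q + lq/4 \<le> x i t"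
        proof (intro allI impI ballI)
          fix t i assume t: "max t1 t2 \<le> t" and i: "i \<in> N"
          have "y t > q + lq/2" using t1 t by simp
          moreover have "r t < m" using rs t by simp
          moreover have "m \<le> lq/4" unfolding m_def by simp
          moreover have "\<bar>x i t - y t\<bar> \<le> r t" by (rule cl[OF i])
          ultimately show "q + lq/4 \<le> x i t" by (simp add: abs_le_iff)
        qed
        have "q < q + lq/4" using lqp by simp
        then show ?thesis using above_contra[OF q(1) q(2) _ lev] by blast
      next
        assume "\<exists>t1. \<forall>t\<ge>t1. y t < q - lq/2"
        then obtain t1 where t1: "\<forall>t\<ge>t1. y t < q - lq/2" by blast
        have "(\<exists>t1. \<forall>t\<ge>t1. y t > p + lp/2) \<or> (\<exists>t1. \<forall>t\<ge>t1. y t < p - lp/2)"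
          by (rule sign_eventually[OF lp lpp ys])
        then show ?thesis
        proof
          assume "\<exists>t1. \<forall>t\<ge>t1. y t > p + lp/2"
          then obtain t3 where t3: "\<forall>t\<ge>t3. y t > p + lp/2" by blast
          have ev: "\<forall>\<^sub>F t in sequentially. \<bar>y t - q\<bar> = q - y t \<and> \<bar>y t - p\<bar> = y t - p"
            unfolding eventually_sequentially
          proof (intro exI allI impI)
            fix t assume t: "max t1 t3 \<le> t"
            have "y t < q - lq/2" "y t > p + lp/2" using t1 t3 t by auto
            then show "\<bar>y t - q\<bar> = q - y t \<and> \<bar>y t - p\<bar> = y t - p" using lqp lpp by simp
          qed
          have "(\<lambda>t. q - y t) \<longlonglongrightarrow> lq"
            using tendsto_cong[of "\<lambda>t. \<bar>y t - q\<bar>" "\<lambda>t. q - y t"] ev lq by (simp add: eventually_mono)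
          then have y1: "y \<longlonglongrightarrow> q - lq"
            using tendsto_diff[OF tendsto_const[of q]] by fastforce
          have "(\<lambda>t. y t - p) \<longlonglongrightarrow> lp"
            using tendsto_cong[of "\<lambda>t. \<bar>y t - p\<bar>" "\<lambda>t. y t - p"] ev lp by (simp add: eventually_mono)
          then have "(\<lambda>t. (y t - p) + p) \<longlonglongrightarrow> lp + p" by (intro tendsto_add tendsto_const)
          then have y2: "y \<longlonglongrightarrow> p + lp" by (simp add: add.commute)
          have weq: "q - lq = p + lp" by (rule LIMSEQ_unique[OF y1 y2])
          define w where "w = p + lp"
          have wX: "w \<in> Xs" by (rule Xs_convex[OF p(1) q(1)]) (use lp0 lq0 weq in \<open>simp_all add: w_def\<close>)
          have "(\<lambda>t. y t - w) \<longlonglongrightarrow> w - w" unfolding w_def by (intro tendsto_diff y2 tendsto_const)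
          then have "(\<lambda>t. \<bar>y t - w\<bar>) \<longlonglongrightarrow> 0" by (simp add: tendsto_rabs_zero_iff)
          then show ?thesis using fin wX by blast
        next
          assume "\<exists>t1. \<forall>t\<ge>t1. y t < p - lp/2"
          then obtain t3 where t3: "\<forall>t\<ge>t3. y t < p - lp/2" by blast
          have lev: "\<forall>t\<ge>max t3 t2. \<forall>i\<in>N. x i t \<le> p - lp/4"
          proof (intro allI impI ballI)
            fix t i assume t: "max t3 t2 \<le> t" and i: "i \<in> N"
            have "y t < p - lp/2" using t3 t by simp
            moreover have "r t < m" using rs t by simp
            moreover have "m \<le> lp/4" unfolding m_def by simp
            moreover have "\<bar>x i t - y t\<bar> \<le> r t" by (rule cl[OF i])
            ultimately show "x i t \<le> p - lp/4" by (simp add: abs_le_iff)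
          qed
          have "p - lp/4 < p" using lpp by simp
          then show ?thesis using below_contra[OF p(1) p(2) _ lev] by blast
        qed
      qed
    qed
  qed
qed

end

theorem theorem4:
  fixes n k f :: nat and E :: "(nat \<times> nat) set" and F :: "nat set"
    and L :: real and h :: "nat \<Rightarrow> real \<Rightarrow> real" and A :: "nat \<Rightarrow> nat \<Rightarrow> real"
    and \<alpha> :: "nat \<Rightarrow> real" and msg :: "nat \<Rightarrow> nat \<Rightarrow> nat \<Rightarrow> real" and x :: "nat \<Rightarrow> nat \<Rightarrow> real"
  assumes "n \<ge> 1" and "k \<ge> 1"
    and "E \<subseteq> {1..n} \<times> {1..n}" and "\<forall>i. (i, i) \<notin> E"
    and "F \<subseteq> {1..n}" and "card F \<le> f"
    and "\<forall>j\<in>{1..k}. admissible L (h j)"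
    and "\<forall>j\<in>{1..k}. \<forall>i\<in>{1..n}. A j i \<ge> 0"
    and "\<forall>i\<in>{1..n}. (\<Sum>j=1..k. A j i) = 1"
    and "condition1 {1..n} E f (sparsity k n A)"
    and "(\<Inter>j\<in>{1..k}. argmin_set (h j)) \<noteq> {}"
    and "\<forall>t. \<alpha> t \<ge> 0" and "\<forall>t. \<alpha> (t + 1) \<le> \<alpha> t"
    and "filterlim (\<lambda>N. \<Sum>t<N. \<alpha> t) at_top sequentially"
    and "summable (\<lambda>t. (\<alpha> t)\<^sup>2)"
    and "alg2_exec {1..n} E f F \<alpha> (\<lambda>i y. \<Sum>j=1..k. A j i * h j y) msg x"
  shows "\<exists>xs\<in>argmin_set (\<lambda>y. (1 / real k) * (\<Sum>j=1..k. h j y)).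
           \<forall>i\<in>{1..n} - F. ((\<lambda>t. \<bar>x i t - xs\<bar>) \<longlongrightarrow> 0) sequentially"
proof -
  note E = assms(3) and nl = assms(4) and F = assms(5) and cF = assms(6) and adm = assms(7)
    and Apos = assms(8) and Asum = assms(9) and cond = assms(10)
  define N where "N = {1..n} - F"
  define sp where "sp = sparsity k n A"
  have finN: "finite N" unfolding N_def by simp
  have cond': "condition1 {1..n} E f sp" using cond unfolding sp_def .
  have cN: "card N \<le> n"
  proof -
    have "card N \<le> card {1..n}" unfolding N_def by (rule card_mono) auto
    then show ?thesis by simp
  qed
  have spP: "(sp \<le> n \<and> cols_pos k n A sp) \<or> sp = n + 1"
    unfolding sp_def sparsity_def by (rule LeastI[of _ "n+1"]) simp
  have spN: "sp \<le> card N" unfolding N_def sp_def by (rule sp_le[OF E F cF cond])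
  have spn: "sp \<le> n" using spN cN by linarith
  then have "sp \<noteq> n + 1" by linarith
  then have cp: "cols_pos k n A sp" using spP by blast
  have sp0: "sp \<noteq> 0"
  proof
    assume "sp = 0"
    then have c0: "cols_pos k n A 0" using cp by simp
    have e: "{} \<subseteq> {1..n} \<and> card ({}::nat set) = 0" by simp
    have "(1::nat) \<in> {1..k}" using assms(2) by simp
    then have "(\<Sum>i\<in>{}. A 1 i) > 0" by (rule c0[unfolded cols_pos_def, rule_format, OF e])
    then show False by simp
  qed
  have Nne: "N \<noteq> {}" using sp0 spN by auto
  have L0: "L \<ge> 0"
  proof -
    have "admissible L (h 1)" using adm assms(2) by simp
    then show ?thesis unfolding admissible_def lipschitz_on_def by blast
  qed
  have msgs: "\<forall>t\<ge>1. \<forall>j\<in>N. \<forall>i. msg t j i = x j (t - 1)"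
    using assms(16) unfolding alg2_exec_def N_def by blast
  have upd: "\<forall>t\<ge>1. \<forall>i\<in>N. alg2_update E f \<alpha> (\<lambda>y. \<Sum>j=1..k. A j i * h j y) msg x i t"
    using assms(16) unfolding alg2_exec_def N_def by blast
  define R where "R t i p \<longleftrightarrow> (x i t = fst p - \<alpha> (t-1) * snd p \<and>
      subgradient (\<lambda>y. \<Sum>j=1..k. A j i * h j y) (x i (t-1)) (snd p) \<and>
      stepok N (big E f) n (\<lambda>j. x j (t-1)) (fst p) i \<and> stepok N (big E f) n (\<lambda>j. - x j (t-1)) (- fst p) i)"
    for t i p
  have exR: "\<exists>p. R t i p" if t: "1 \<le> t" and i: "i \<in> N" for t i
  proof -
    have u: "alg2_update E f \<alpha> (\<lambda>y. \<Sum>j=1..k. A j i * h j y) msg x i t" using upd t i by blast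
    have m: "\<forall>j\<in>N. msg t j i = x j (t - 1)" using msgs t by blast
    obtain aa d where ad: "x i t = aa - \<alpha> (t - 1) * d \<and> subgradient (\<lambda>y. \<Sum>j=1..k. A j i * h j y) (x i (t - 1)) d \<and>
      stepok N (big E f) n (\<lambda>j. x j (t - 1)) aa i \<and> stepok N (big E f) n (\<lambda>j. - x j (t - 1)) (- aa) i"
      using alg_step[OF E nl F cF cond N_def i u m] by blast
    have "R t i (aa, d)" unfolding R_def using ad by simp
    then show ?thesis by blast
  qed
  define pp where "pp i t = (SOME p. R t i p)" for i t
  define a where "a i t = fst (pp i t)" for i t
  define dd where "dd i t = snd (pp i t)" for i t
  have Rp: "R t i (pp i t)" if "1 \<le> t" "i \<in> N" for t i
    unfolding pp_def by (rule someI_ex[OF exR[OF that]])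
  have step: "\<forall>t\<ge>1. \<forall>i\<in>N. x i t = a i t - \<alpha> (t-1) * dd i t \<and> stepok N (big E f) n (\<lambda>j. x j (t-1)) (a i t) i
                 \<and> stepok N (big E f) n (\<lambda>j. - x j (t-1)) (- a i t) i"
    using Rp unfolding R_def a_def dd_def by blast
  have sgt: "\<forall>t\<ge>1. \<forall>i\<in>N. subgradient (\<lambda>y. \<Sum>j=1..k. A j i * h j y) (x i (t-1)) (dd i t)"
    using Rp unfolding R_def dd_def by blast
  have ddL: "\<forall>t\<ge>1. \<forall>i\<in>N. \<bar>dd i t\<bar> \<le> L"
  proof (intro allI impI ballI)
    fix t i :: nat assume t: "1 \<le> t" and i: "i \<in> N"
    have iV: "i \<in> {1..n}" using i unfolding N_def by simp
    have Ap: "\<forall>j\<in>{1..k}. A j i \<ge> 0" using Apos iV by blast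
    have As: "(\<Sum>j=1..k. A j i) = 1" using Asum iV by blast
    have lip: "\<forall>u v. \<bar>(\<Sum>j=1..k. A j i * h j u) - (\<Sum>j=1..k. A j i * h j v)\<bar> \<le> L * \<bar>u - v\<bar>"
      using g_lip[where A=A and h=h and i=i and k=k, OF adm Ap As] by blast
    show "\<bar>dd i t\<bar> \<le> L" by (rule subgrad_bound[OF _ lip]) (use sgt t i in blast)
  qed
  have G1p: "\<forall>Lo Hi. Lo \<subseteq> N \<and> Hi \<subseteq> N \<and> Lo \<union> Hi = N \<and> Lo \<noteq> N \<and> Hi \<noteq> N
              \<longrightarrow> (\<exists>i\<in>N - Lo. big E f Lo i) \<or> (\<exists>i\<in>N - Hi. big E f Hi i)"
  proof (intro allI impI)
    fix Lo Hi assume hh: "Lo \<subseteq> N \<and> Hi \<subseteq> N \<and> Lo \<union> Hi = N \<and> Lo \<noteq> N \<and> Hi \<noteq> N"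
    show "(\<exists>i\<in>N - Lo. big E f Lo i) \<or> (\<exists>i\<in>N - Hi. big E f Hi i)"
      by (rule G1[OF E F cF cond N_def]) (use hh in blast)+
  qed
  have G2p: "\<forall>j0\<in>{1..k}. \<forall>Lc. {i\<in>N. A j0 i > 0} \<subseteq> Lc \<and> Lc \<subseteq> N \<and> Lc \<noteq> N \<longrightarrow> (\<exists>i\<in>N - Lc. big E f Lc i)"
  proof (intro ballI allI impI)
    fix j0 :: nat and Lc assume j0: "j0 \<in> {1..k}" and hh: "{i\<in>N. A j0 i > 0} \<subseteq> Lc \<and> Lc \<subseteq> N \<and> Lc \<noteq> N"
    show "\<exists>i\<in>N - Lc. big E f Lc i"
      by (rule G2[OF E F cF cond' N_def cp j0 Apos]) (use hh in blast)+
  qed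
  have ApN: "\<forall>j\<in>{1..k}. \<forall>i\<in>N. A j i \<ge> 0" using Apos unfolding N_def by blast
  have C: "ctx n k f E L h A \<alpha> x a dd N"
    unfolding ctx_def
    by (intro conjI finN Nne cN assms(1) assms(2) step sgt ddL L0 assms(12) assms(13) assms(14) assms(15)
        adm ApN G1p G2p assms(11))
  obtain w where w: "w \<in> ctx.Xs k h" and conv: "\<forall>i\<in>N. (\<lambda>t. \<bar>x i t - w\<bar>) \<longlonglongrightarrow> 0"
    using ctx.main_ctx[OF C] by blast
  have wa: "\<forall>j\<in>{1..k}. w \<in> argmin_set (h j)" using ctx.Xs_arg[OF C w] .
  have "w \<in> argmin_set (\<lambda>y. (1 / real k) * (\<Sum>j=1..k. h j y))"
    unfolding argmin_set_def
  proof (rule CollectI, rule allI)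
    fix y
    have "(\<Sum>j=1..k. h j w) \<le> (\<Sum>j=1..k. h j y)"
    proof (rule sum_mono)
      fix j assume "j \<in> {1..k}"
      then show "h j w \<le> h j y" using wa unfolding argmin_set_def by blast
    qed
    then show "(1 / real k) * (\<Sum>j=1..k. h j w) \<le> (1 / real k) * (\<Sum>j=1..k. h j y)"
      by (rule mult_left_mono) simp
  qed
  then show ?thesis using conv unfolding N_def by blast
qed


end
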